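(* Let $H\ge1$, $\varepsilon\in(0,0.1]$, $\delta\in(0,1]$. For any MHR distribution $F$ supported on $[1,H]$, Algorithm U executed with $\ell=1$, $r=H$, $\gamma=1/e$, error parameter $\varepsilon$ and failure parameter $\delta$ (and a sufficiently large absolute constant $C$) outputs a price $p^{\mathsf{Alg}}$ such that $$\Pr\big[\mathrm{Rev}(p^{\mathsf{Alg}})\ge(1-5\varepsilon)\,\mathrm{Rev}(p^{\mathsf{opt}})\big]\ge 1-\delta,$$ using a total of $\mathcal{O}\big(\tfrac{1}{\varepsilon^2}\log^4\tfrac{H}{\varepsilon}\log\tfrac1\delta\big)$ pricing queries.
   Context: Pricing query model: the buyer's value has unknown CDF $F(p)=\Pr[v<p]$; a query at price $p$ draws a fresh independent $v\sim F$ and reveals only $\mathbf 1\{v\ge p\}$. $q(p)=1-F(p)$, $\mathrm{Rev}(p)=p\,q(p)$, and $p^{\mathsf{opt}}\in\arg\max_p\mathrm{Rev}(p)$. $F$ (with density $f$) is MHR if the hazard rate $f(v)/(1-F(v))$ is nondecreasing on its support. Logarithms are natural. Algorithm U (input $\ell,r,\delta,\varepsilon,\gamma$; absolute constant $C$): Let $S_1=\{(1+\varepsilon)^k\ell: k\in\mathbb{N}_0,\ (1+\varepsilon)^k\ell\le r\}$, $S_{can}=\emptyset$, $i=1$, $\widetilde R=22\log^2(r/\ell)+44\log(r/\ell)\log(1/\varepsilon)+66\log(1/\varepsilon)$. While $|S_i|\ge 20$: let $\ell_i=\min S_i$, $r_i=\max S_i$, $a_i=\min\{p\in S_i: p>\ell_i+0.2(r_i-\ell_i)\}$,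 $b_i=\min\{p\in S_i:p>\ell_i+0.5(r_i-\ell_i)\}$. Post $b_i$ for $C\log(\widetilde R/\delta)\gamma^{-1}$ queries and let $\widehat q(b_i)$ be the empirical purchase fraction. If $\widehat q(b_i)<0.75\gamma$, set $S_{i+1}=S_i\cap[\ell_i,b_i]$, $i\leftarrow i+1$, continue. Otherwise add $a_i,b_i$ to $S_{can}$; for $p\in\{a_i,b_i\}$ post $p$ for $C\log(\widetilde R/\delta)\gamma^{-1}\varepsilon^{-2}$ queries and set $\widehat{\mathrm{Rev}}(p)=p\cdot$(empirical purchase fraction). If $(1+\varepsilon)\widehat{\mathrm{Rev}}(a_i)<(1-\varepsilon)\widehat{\mathrm{Rev}}(b_i)$ set $S_{i+1}=S_i\cap[a_i,r_i]$, else $S_{i+1}=S_i\cap[\ell_i,b_i]$; $i\leftarrow i+1$. After the loop, add every $p$ of the final set to $S_{can}$, estimate $\widehat{\mathrm{Rev}}(p)$ for each $p\in S_{can}$ with $C\log(\widetilde R/\delta)\gamma^{-1}\varepsilon^{-2}$ fresh queries, and output $p^{\mathsf{Alg}}=\arg\max_{p\in S_{can}}\widehat{\mathrm{Rev}}(p)$. *)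

theory Defs
  imports "HOL-Probability.Probability"
begin

definition sale_prob :: "real measure \<Rightarrow> real \<Rightarrow> real" where
  "sale_prob M p = measure M {v. p \<le> v}"

definition cdf_lt :: "real measure \<Rightarrow> real \<Rightarrow> real" where
  "cdf_lt M p = measure M {v. v < p}"

definition Rev :: "real measure \<Rightarrow> real \<Rightarrow> real" where
  "Rev M p = p * sale_prob M p"

definition MHR_on :: "real measure \<Rightarrow> (real \<Rightarrow> real) \<Rightarrow> real \<Rightarrow> bool" where
  "MHR_on M f H \<longleftrightarrow>
     prob_space M \<and> f \<in> borel_measurable borel \<and> (\<forall>v. 0 \<le> f v) \<and>
     M = density lborel f \<and> (\<forall>v. v \<notin> {1..H} \<longrightarrow> f v = 0) \<and>
     (\<forall>x y. 1 \<le> x \<longrightarrow> x \<le> y \<longrightarrow> y \<le> H \<longrightarrow> cdf_lt M y < 1 \<longrightarrow>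
        f x / (1 - cdf_lt M x) \<le> f y / (1 - cdf_lt M y))"

definition grid :: "real \<Rightarrow> real \<Rightarrow> real \<Rightarrow> real set" where
  "grid l r \<epsilon> = {(1 + \<epsilon>) ^ k * l | k::nat. (1 + \<epsilon>) ^ k * l \<le> r}"

definition Rtilde :: "real \<Rightarrow> real \<Rightarrow> real \<Rightarrow> real" where
  "Rtilde l r \<epsilon> = 22 * (ln (r / l))\<^sup>2 + 44 * ln (r / l) * ln (1 / \<epsilon>) + 66 * ln (1 / \<epsilon>)"

text \<open>State: (S_i, S_can, number of queries used so far).
  A query batch of n posts at price p yields the number of purchases, distributed
  as binomial_pmf n (q p) (sum of n independent purchase indicators).
  The fuel argument only bounds the number of iterations; it is set to card S_1,
  which is never reached unless the loop fails to shrink S_i.\<close>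
fun U_loop :: "(real \<Rightarrow> real) \<Rightarrow> real \<Rightarrow> real \<Rightarrow> nat \<Rightarrow> nat \<Rightarrow> nat \<Rightarrow>
    real set \<times> real set \<times> nat \<Rightarrow> (real set \<times> real set \<times> nat) pmf" where
  "U_loop q \<epsilon> \<gamma> n1 n2 0 st = return_pmf st"
| "U_loop q \<epsilon> \<gamma> n1 n2 (Suc fuel) (S, Sc, Q) =
    (if card S < 20 then return_pmf (S, Sc, Q) else
     (let l = Min S; r = Max S;
          a = Min {p \<in> S. p > l + 0.2 * (r - l)};
          b = Min {p \<in> S. p > l + 0.5 * (r - l)} in
      bind_pmf (binomial_pmf n1 (q b)) (\<lambda>k.
        if real k / real n1 < 0.75 * \<gamma>
        then U_loop q \<epsilon> \<gamma> n1 n2 fuel (S \<inter> {l..b}, Sc, Q + n1)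
        else bind_pmf (binomial_pmf n2 (q a)) (\<lambda>ka.
             bind_pmf (binomial_pmf n2 (q b)) (\<lambda>kb.
               (let Ra = a * (real ka / real n2); Rb = b * (real kb / real n2) in
                U_loop q \<epsilon> \<gamma> n1 n2 fuel
                  (if (1 + \<epsilon>) * Ra < (1 - \<epsilon>) * Rb then S \<inter> {a..r} else S \<inter> {l..b},
                   Sc \<union> {a, b}, Q + n1 + 2 * n2)))))))"

fun est_list :: "(real \<Rightarrow> real) \<Rightarrow> nat \<Rightarrow> real list \<Rightarrow> (real \<times> real) list pmf" where
  "est_list q n [] = return_pmf []"
| "est_list q n (p # ps) =
    bind_pmf (binomial_pmf n (q p)) (\<lambda>k.
    bind_pmf (est_list q n ps) (\<lambda>rest. return_pmf ((p, p * (real k / real n)) # rest)))"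

definition pick_argmax :: "(real \<times> real) list \<Rightarrow> real" where
  "pick_argmax L = Min {p. (p, Max (snd ` set L)) \<in> set L}"

text \<open>Algorithm U: returns the distribution of (output price, total number of queries).\<close>
definition AlgU :: "(real \<Rightarrow> real) \<Rightarrow> real \<Rightarrow> real \<Rightarrow> real \<Rightarrow> real \<Rightarrow> real \<Rightarrow> real \<Rightarrow>
    (real \<times> nat) pmf" where
  "AlgU q l r \<delta> \<epsilon> \<gamma> C =
    (let S1 = grid l r \<epsilon>;
         Rt = Rtilde l r \<epsilon>;
         n1 = nat \<lceil>C * ln (Rt / \<delta>) / \<gamma>\<rceil>;
         n2 = nat \<lceil>C * ln (Rt / \<delta>) / (\<gamma> * \<epsilon>\<^sup>2)\<rceil> in
     bind_pmf (U_loop q \<epsilon> \<gamma> n1 n2 (card S1) (S1, {}, 0)) (\<lambda>(S, Sc, Q).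
       (let Sc' = Sc \<union> S in
        bind_pmf (est_list q n2 (sorted_list_of_set Sc')) (\<lambda>L.
          return_pmf (pick_argmax L, Q + n2 * card Sc')))))"

end

theory Submission
  imports Defs
begin


locale mhr =
  fixes M :: "real measure" and f :: "real \<Rightarrow> real" and H :: real
  assumes MHR: "MHR_on M f H" and H1: "H \<ge> 1"
begin

abbreviation q where "q \<equiv> sale_prob M"

lemma ps: "prob_space M" using MHR unfolding MHR_on_def by auto
lemma Mdef: "M = density lborel f" using MHR unfolding MHR_on_def by auto
lemma fmeas[measurable]: "f \<in> borel_measurable borel" using MHR unfolding MHR_on_def by auto
lemma fnn: "0 \<le> f v" using MHR unfolding MHR_on_def by auto
lemma fzero: "v \<notin> {1..H} \<Longrightarrow> f v = 0" using MHR unfolding MHR_on_def by auto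
lemma setsM[simp]: "sets M = sets borel" by (subst Mdef) simp
lemma spaceM[simp]: "space M = UNIV" by (subst Mdef) simp

lemma hazard: "1 \<le> x \<Longrightarrow> x \<le> y \<Longrightarrow> y \<le> H \<Longrightarrow> cdf_lt M y < 1 \<Longrightarrow>
        f x / (1 - cdf_lt M x) \<le> f y / (1 - cdf_lt M y)"
  using MHR unfolding MHR_on_def by blast

lemma emeas: "A \<in> sets borel \<Longrightarrow> emeasure M A = (\<integral>\<^sup>+ x. ennreal (f x) * indicator A x \<partial>lborel)"
  by (subst Mdef) (rule emeasure_density, auto)

interpretation P: prob_space M by (rule ps)

lemma finM: "emeasure M A \<noteq> \<infinity>" by simp

lemma cdf_q: "cdf_lt M x = 1 - q x"
proof -
  have "{v. v < x} = space M - {v. x \<le> v}" by auto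
  then show ?thesis unfolding cdf_lt_def sale_prob_def
    using P.prob_compl[of "{v. x \<le> v}"] by simp
qed

lemma q_nonneg: "0 \<le> q x" unfolding sale_prob_def by simp
lemma q_le1: "q x \<le> 1" unfolding sale_prob_def by simp
lemma q_anti: "x \<le> y \<Longrightarrow> q y \<le> q x"
  unfolding sale_prob_def by (intro P.finite_measure_mono) auto

lemma q_diff: "x \<le> y \<Longrightarrow> q x - q y = measure M {x..<y}"
proof -
  assume xy: "x \<le> y"
  have "{v. x \<le> v} = {x..<y} \<union> {v. y \<le> v}" using xy by auto
  moreover have "measure M ({x..<y} \<union> {v. y \<le> v}) = measure M {x..<y} + measure M {v. y \<le> v}"
    by (intro P.finite_measure_Union) auto
  ultimately show ?thesis unfolding sale_prob_def by simp
qed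

lemma int_upper:
  assumes xy: "x \<le> y" and c: "0 \<le> c" and b: "\<And>v. x \<le> v \<Longrightarrow> v < y \<Longrightarrow> f v \<le> c"
  shows "q x - q y \<le> c * (y - x)"
proof -
  have "emeasure M {x..<y} = (\<integral>\<^sup>+ v. ennreal (f v) * indicator {x..<y} v \<partial>lborel)"
    by (rule emeas) auto
  also have "\<dots> \<le> (\<integral>\<^sup>+ v. ennreal c * indicator {x..<y} v \<partial>lborel)"
    by (intro nn_integral_mono) (auto simp: indicator_def b intro!: ennreal_leI)
  also have "\<dots> = ennreal c * ennreal (y - x)"
    using xy by (subst nn_integral_cmult_indicator) auto
  also have "\<dots> = ennreal (c * (y - x))" using c xy by (simp add: ennreal_mult)
  finally have "emeasure M {x..<y} \<le> ennreal (c * (y - x))" .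
  then have "measure M {x..<y} \<le> c * (y - x)"
    using c xy by (simp add: P.emeasure_eq_measure)
  then show ?thesis using q_diff[OF xy] by simp
qed

lemma int_lower:
  assumes xy: "x \<le> y" and c: "0 \<le> c" and b: "\<And>v. x \<le> v \<Longrightarrow> v < y \<Longrightarrow> c \<le> f v"
  shows "c * (y - x) \<le> q x - q y"
proof -
  have "ennreal (c * (y - x)) = ennreal c * ennreal (y - x)" using c xy by (simp add: ennreal_mult)
  also have "\<dots> = (\<integral>\<^sup>+ v. ennreal c * indicator {x..<y} v \<partial>lborel)"
    using xy by (subst nn_integral_cmult_indicator) auto
  also have "\<dots> \<le> (\<integral>\<^sup>+ v. ennreal (f v) * indicator {x..<y} v \<partial>lborel)"
    by (intro nn_integral_mono) (auto simp: indicator_def b intro!: ennreal_leI)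
  also have "\<dots> = emeasure M {x..<y}"
    by (rule emeas[symmetric]) auto
  finally have "ennreal (c * (y - x)) \<le> emeasure M {x..<y}" .
  then have "c * (y - x) \<le> measure M {x..<y}"
    by (simp add: P.emeasure_eq_measure)
  then show ?thesis using q_diff[OF xy] by simp
qed

lemma q_below: "x \<le> 1 \<Longrightarrow> q x = 1"
proof -
  assume x: "x \<le> 1"
  have "emeasure M {v. v < x} = (\<integral>\<^sup>+ v. ennreal (f v) * indicator {v. v < x} v \<partial>lborel)"
    by (rule emeas) auto
  also have "\<dots> = (\<integral>\<^sup>+ v. 0 \<partial>lborel)"
  proof -
    have "\<And>v. v < x \<Longrightarrow> f v = 0" using x by (intro fzero) auto
    then have "(\<lambda>v. ennreal (f v) * indicator {v. v < x} v) = (\<lambda>v. 0)" by (auto simp: indicator_def fun_eq_iff)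
    then show ?thesis by simp
  qed
  finally have "measure M {v. v < x} = 0" by (simp add: P.emeasure_eq_measure)
  then show ?thesis using cdf_q[of x] unfolding cdf_lt_def by simp
qed

lemma q_above: "H \<le> x \<Longrightarrow> q x = 0"
proof -
  assume x: "H \<le> x"
  have "emeasure M {v. x \<le> v} = (\<integral>\<^sup>+ v. ennreal (f v) * indicator {v. x \<le> v} v \<partial>lborel)"
    by (rule emeas) auto
  also have "\<dots> = (\<integral>\<^sup>+ v. 0 \<partial>lborel)"
  proof -
    have "AE v in lborel. ennreal (f v) * indicator {v. x \<le> v} v = 0"
    proof (rule eventually_mono[OF AE_lborel_singleton[of H]])
      fix v assume "v \<noteq> H"
      then have "x \<le> v \<Longrightarrow> f v = 0" using x by (intro fzero) auto
      then show "ennreal (f v) * indicator {v. x \<le> v} v = 0" by (auto simp: indicator_def)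
    qed
    from nn_integral_cong_AE[OF this] show ?thesis by simp
  qed
  finally have "measure M {v. x \<le> v} = 0" by (simp add: P.emeasure_eq_measure)
  then show ?thesis unfolding sale_prob_def by simp
qed

lemma qpos_lt_H: "0 < q y \<Longrightarrow> y < H"
  using q_above[of y] by force

definition h where "h v = f v / q v"

lemma h_nonneg: "0 \<le> h v" unfolding h_def using fnn q_nonneg by simp

lemma h_mono: "1 \<le> x \<Longrightarrow> x \<le> y \<Longrightarrow> 0 < q y \<Longrightarrow> h x \<le> h y"
  using hazard[of x y] qpos_lt_H[of y] unfolding h_def cdf_q by simp

lemma f_eq: "0 < q v \<Longrightarrow> f v = h v * q v" unfolding h_def by simp

lemma step_up:
  assumes "1 \<le> x" "x \<le> x'" "x' \<le> y" "0 < q y"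
  shows "q x - q x' \<le> h y * q x * (x' - x)"
proof (rule int_upper)
  show "x \<le> x'" by fact
  show "0 \<le> h y * q x" using h_nonneg q_nonneg by simp
  fix v assume v: "x \<le> v" "v < x'"
  have qv: "0 < q v" using q_anti[of v y] assms v by simp
  have "f v = h v * q v" using f_eq[OF qv] .
  also have "\<dots> \<le> h y * q v" using h_mono[of v y] assms v q_nonneg by (intro mult_right_mono) auto
  also have "\<dots> \<le> h y * q x" using q_anti[of x v] v h_nonneg by (intro mult_left_mono) auto
  finally show "f v \<le> h y * q x" .
qed

lemma step_low:
  assumes "1 \<le> y" "y \<le> w" "w \<le> w'" "0 < q w'"
  shows "h y * q w' * (w' - w) \<le> q w - q w'"
proof (rule int_lower)
  show "w \<le> w'" by fact
  show "0 \<le> h y * q w'" using h_nonneg q_nonneg by simp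
  fix v assume v: "w \<le> v" "v < w'"
  have qv: "0 < q v" using q_anti[of v w'] assms v by simp
  have "h y * q w' \<le> h y * q v" using q_anti[of v w'] v h_nonneg by (intro mult_left_mono) auto
  also have "\<dots> \<le> h v * q v" using h_mono[of y v] assms v q_nonneg qv by (intro mult_right_mono) auto
  also have "\<dots> = f v" using f_eq[OF qv] by simp
  finally show "h y * q w' \<le> f v" .
qed

lemma iter_up:
  assumes x: "1 \<le> x" and d: "0 \<le> d" and N: "x + real N * d \<le> y" and qy: "0 < q y"
    and hd: "h y * d \<le> 1"
  shows "k \<le> N \<Longrightarrow> q x * (1 - h y * d) ^ k \<le> q (x + real k * d)"
proof (induction k)
  case 0 then show ?case by simp
next
  case (Suc k)
  have k: "k \<le> N" using Suc by simp
  have le: "x + real (Suc k) * d \<le> y"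
    using N Suc.prems d by (smt (verit) mult_right_mono of_nat_le_iff)
  have st: "q (x + real k * d) - q (x + real (Suc k) * d) \<le> h y * q (x + real k * d) * d"
  proof -
    have "0 \<le> real k * d" using d by simp
    then have 1: "1 \<le> x + real k * d" using x by linarith
    have 2: "x + real k * d \<le> x + real (Suc k) * d" using d by (simp add: algebra_simps)
    from step_up[OF 1 2 le qy] show ?thesis by (simp add: algebra_simps)
  qed
  have "q x * (1 - h y * d) ^ Suc k = (q x * (1 - h y * d) ^ k) * (1 - h y * d)" by simp
  also have "\<dots> \<le> q (x + real k * d) * (1 - h y * d)"
    using Suc.IH[OF k] hd by (intro mult_right_mono) auto
  also have "\<dots> \<le> q (x + real (Suc k) * d)" using st by (simp add: algebra_simps)
  finally show ?case .
qed

lemma iter_low: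
  assumes y: "1 \<le> y" and d: "0 \<le> d" and N: "y + real N * d \<le> z" and qz: "0 < q z"
  shows "k \<le> N \<Longrightarrow> q (y + real k * d) * (1 + h y * d) ^ k \<le> q y"
proof (induction k)
  case 0 then show ?case by simp
next
  case (Suc k)
  have k: "k \<le> N" using Suc by simp
  have le: "y + real (Suc k) * d \<le> z"
    using N Suc.prems d by (smt (verit) mult_right_mono of_nat_le_iff)
  have qp: "0 < q (y + real (Suc k) * d)" using q_anti[OF le] qz by simp
  have st: "h y * q (y + real (Suc k) * d) * d \<le> q (y + real k * d) - q (y + real (Suc k) * d)"
  proof -
    have "0 \<le> real k * d" using d by simp
    then show ?thesis using step_low[of y "y + real k * d" "y + real (Suc k) * d"] y d qp
      by (simp add: algebra_simps)
  qed
  have hd: "0 \<le> 1 + h y * d" using h_nonneg d by simp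
  have "q (y + real (Suc k) * d) * (1 + h y * d) ^ Suc k
      = (q (y + real (Suc k) * d) * (1 + h y * d)) * (1 + h y * d) ^ k" by simp
  also have "\<dots> \<le> q (y + real k * d) * (1 + h y * d) ^ k"
    using st hd by (intro mult_right_mono) (auto simp: algebra_simps)
  also have "\<dots> \<le> q y" using Suc.IH[OF k] .
  finally show ?case .
qed

lemma exp_up:
  assumes x: "1 \<le> x" and xy: "x \<le> y" and qy: "0 < q y"
  shows "q x * exp (- (h y * (y - x))) \<le> q y"
proof -
  define c where "c = h y * (y - x)"
  have c0: "0 \<le> c" unfolding c_def using h_nonneg xy by simp
  have lim: "(\<lambda>n. q x * (1 + (-c) / real n) ^ n) \<longlonglongrightarrow> q x * exp (-c)"
    by (intro tendsto_mult_left tendsto_exp_limit_sequentially)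
  show ?thesis unfolding c_def[symmetric]
  proof (rule LIMSEQ_le_const2[OF lim])
    obtain N0 :: nat where N0: "c < real N0" using reals_Archimedean2 by blast
    show "\<exists>N. \<forall>n\<ge>N. q x * (1 + - c / real n) ^ n \<le> q y"
    proof (intro exI allI impI)
      fix n assume n: "Suc N0 \<le> n"
      then have npos: "0 < real n" by simp
      define d where "d = (y - x) / real n"
      have d0: "0 \<le> d" unfolding d_def using xy by simp
      have eq: "x + real n * d = y" unfolding d_def using npos by simp
      have hd: "h y * d = c / real n" unfolding d_def c_def by simp
      have "c / real n \<le> 1" using N0 n npos by (simp add: field_simps)
      then have "q x * (1 - h y * d) ^ n \<le> q (x + real n * d)"
        using iter_up[of x d n y n] x d0 eq qy hd by simp
      then show "q x * (1 + - c / real n) ^ n \<le> q y" using eq hd by simp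
    qed
  qed
qed

lemma exp_low:
  assumes y: "1 \<le> y" and yz: "y \<le> z" and qz: "0 < q z"
  shows "q z * exp (h y * (z - y)) \<le> q y"
proof -
  define c where "c = h y * (z - y)"
  have lim: "(\<lambda>n. q z * (1 + c / real n) ^ n) \<longlonglongrightarrow> q z * exp c"
    by (intro tendsto_mult_left tendsto_exp_limit_sequentially)
  show ?thesis unfolding c_def[symmetric]
  proof (rule LIMSEQ_le_const2[OF lim])
    show "\<exists>N. \<forall>n\<ge>N. q z * (1 + c / real n) ^ n \<le> q y"
    proof (intro exI allI impI)
      fix n assume n: "Suc 0 \<le> n"
      then have npos: "0 < real n" by simp
      define d where "d = (z - y) / real n"
      have d0: "0 \<le> d" unfolding d_def using yz by simp
      have eq: "y + real n * d = z" unfolding d_def using npos by simp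
      have hd: "h y * d = c / real n" unfolding d_def c_def by simp
      have "q (y + real n * d) * (1 + h y * d) ^ n \<le> q y"
        using iter_low[of y d n z n] y d0 eq qz by simp
      then show "q z * (1 + c / real n) ^ n \<le> q y" using eq hd by simp
    qed
  qed
qed

lemma logconc:
  assumes x: "1 \<le> x" and xy: "x \<le> y" and yz: "y \<le> z" and qz: "0 < q z"
  shows "(z - y) * ln (q x) + (y - x) * ln (q z) \<le> (z - x) * ln (q y)"
proof -
  have qy: "0 < q y" using q_anti[OF yz] qz by simp
  have qx: "0 < q x" using q_anti[OF xy] qy by simp
  have "ln (q x * exp (- (h y * (y - x)))) \<le> ln (q y)"
    using exp_up[OF x xy qy] qx qy by (subst ln_le_cancel_iff) auto
  then have A: "ln (q x) - h y * (y - x) \<le> ln (q y)" using qx by (simp add: ln_mult)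
  have "ln (q z * exp (h y * (z - y))) \<le> ln (q y)"
    using exp_low[of y z] x xy yz qz qy by (subst ln_le_cancel_iff) auto
  then have B: "ln (q z) + h y * (z - y) \<le> ln (q y)" using qz by (simp add: ln_mult)
  have A': "(z - y) * (ln (q x) - h y * (y - x)) \<le> (z - y) * ln (q y)"
    using A yz by (intro mult_left_mono) auto
  have B': "(y - x) * (ln (q z) + h y * (z - y)) \<le> (y - x) * ln (q y)"
    using B xy by (intro mult_left_mono) auto
  show ?thesis using A' B' by (simp add: algebra_simps)
qed

lemma Rev_eq: "Rev M p = p * q p" unfolding Rev_def by simp
lemma q1: "q 1 = 1" using q_below by simp

end

lemma ln_concave3:
  fixes u x v :: real
  assumes "0 < u" "u \<le> x" "x \<le> v"
  shows "(v - x) * ln u + (x - u) * ln v \<le> (v - u) * ln x"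
proof -
  have x0: "0 < x" using assms by simp
  have "ln (u / x) \<le> u / x - 1" using assms by (intro ln_le_minus_one) auto
  then have A: "ln u \<le> ln x + (u - x) / x" using assms x0 by (simp add: ln_div field_simps)
  have "ln (v / x) \<le> v / x - 1" using assms x0 by (intro ln_le_minus_one) auto
  then have B: "ln v \<le> ln x + (v - x) / x" using assms x0 by (simp add: ln_div field_simps)
  have A': "(v - x) * ln u \<le> (v - x) * (ln x + (u - x) / x)" using A assms by (intro mult_left_mono) auto
  have B': "(x - u) * ln v \<le> (x - u) * (ln x + (v - x) / x)" using B assms by (intro mult_left_mono) auto
  have "(v - x) * (ln x + (u - x) / x) + (x - u) * (ln x + (v - x) / x) = (v - u) * ln x"
    using x0 by (simp add: field_simps)
  then show ?thesis using A' B' by linarith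
qed

locale mhr_opt = mhr +
  fixes popt :: real
  assumes opt: "\<And>p. Rev M p \<le> Rev M popt"
begin

lemma Rpos: "1 \<le> Rev M popt" using opt[of 1] by (simp add: Rev_eq q1)

lemma popt_ge1: "1 \<le> popt"
proof (rule ccontr)
  assume "\<not> 1 \<le> popt"
  then have "popt < 1" by simp
  then have "Rev M popt = popt" using q_below[of popt] by (simp add: Rev_eq)
  then show False using Rpos \<open>popt < 1\<close> by simp
qed

lemma qopt_pos: "0 < q popt"
proof (rule ccontr)
  assume "\<not> 0 < q popt" then have "q popt = 0" using q_nonneg[of popt] by simp
  then show False using Rpos by (simp add: Rev_eq)
qed

lemma popt_lt_H: "popt < H" using qpos_lt_H qopt_pos by simp

lemma qopt_ge: "exp (-1) \<le> q popt"
proof (rule ccontr)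
  assume "\<not> exp (-1) \<le> q popt"
  then have "q popt < exp (-1)" by simp
  then have "ln (q popt) < -1" using qopt_pos by (metis ln_exp ln_less_cancel_iff exp_gt_zero)
  define \<kappa> where "\<kappa> = - ln (q popt)"
  have k1: "1 < \<kappa>" unfolding \<kappa>_def using \<open>ln (q popt) < -1\<close> by simp
  have p1: "1 < popt"
  proof (rule ccontr)
    assume "\<not> 1 < popt" then have "popt = 1" using popt_ge1 by simp
    then show False using \<open>ln (q popt) < -1\<close> q1 by simp
  qed
  define s where "s = (\<kappa> - 1) / (2 * \<kappa>)"
  have s0: "0 < s" "s < 1" using k1 unfolding s_def by (auto simp: field_simps)
  define p where "p = popt - s * (popt - 1)"
  have p_ge: "1 \<le> p" unfolding p_def using s0 p1
    by (smt (verit) mult_less_cancel_right2)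
  have p_le: "p \<le> popt" unfolding p_def using s0 p1 by simp
  have lc: "(popt - p) * ln (q 1) + (p - 1) * ln (q popt) \<le> (popt - 1) * ln (q p)"
    using logconc[of 1 p popt] p_ge p_le qopt_pos by simp
  have pm1: "p - 1 = (1 - s) * (popt - 1)" unfolding p_def by (simp add: algebra_simps)
  have "(popt - 1) * ((1 - s) * ln (q popt)) \<le> (popt - 1) * ln (q p)"
    using lc pm1 q1 by (simp add: algebra_simps)
  then have lnqp: "(1 - s) * ln (q popt) \<le> ln (q p)" using p1 by simp
  have qp: "0 < q p" using q_anti[OF p_le] qopt_pos by simp
  have "exp ((1 - s) * ln (q popt)) \<le> q p" using lnqp qp
    by (metis exp_le_cancel_iff exp_ln)
  moreover have "exp ((1 - s) * ln (q popt)) = q popt * exp (s * \<kappa>)"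
    unfolding \<kappa>_def using qopt_pos by (simp add: algebra_simps exp_diff exp_minus field_simps)
  ultimately have A: "q popt * exp (s * \<kappa>) \<le> q p" by simp
  have B: "1 + s * \<kappa> \<le> exp (s * \<kappa>)" by (rule exp_ge_add_one_self)
  have C: "popt * (1 - s) \<le> p" unfolding p_def using s0 by (simp add: algebra_simps)
  have D: "1 < (1 - s) * (1 + s * \<kappa>)"
  proof -
    have e1: "(1 - s) * (1 + s * \<kappa>) = 1 + s * (\<kappa> - 1) - s * (s * \<kappa>)" by (simp add: algebra_simps)
    have e2: "s * \<kappa> = (\<kappa> - 1) / 2" unfolding s_def using k1 by (simp add: field_simps)
    have "(1 - s) * (1 + s * \<kappa>) = 1 + s * (\<kappa> - 1) - s * ((\<kappa> - 1) / 2)"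
    proof -
      have e3: "s * (s * \<kappa>) = s * ((\<kappa> - 1) / 2)" using e2 by simp
      show ?thesis using e1 e3 by linarith
    qed
    also have "\<dots> = 1 + s * ((\<kappa> - 1) / 2)" by (simp add: algebra_simps)
    finally have "(1 - s) * (1 + s * \<kappa>) = 1 + s * ((\<kappa> - 1) / 2)" .
    moreover have "0 < s * ((\<kappa> - 1) / 2)" using s0 k1 by simp
    ultimately show ?thesis by simp
  qed
  have "Rev M popt = popt * q popt" by (simp add: Rev_eq)
  also have "\<dots> < popt * q popt * ((1 - s) * (1 + s * \<kappa>))"
    using D p1 qopt_pos by simp
  also have "\<dots> = (popt * (1 - s)) * (q popt * (1 + s * \<kappa>))" by (simp add: algebra_simps)
  also have "\<dots> \<le> p * (q popt * exp (s * \<kappa>))"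
    using C B s0 p1 qopt_pos k1 p_ge by (intro mult_mono mult_left_mono) auto
  also have "\<dots> \<le> p * q p" using A p_ge by (intro mult_left_mono) auto
  also have "\<dots> = Rev M p" by (simp add: Rev_eq)
  finally show False using opt[of p] by simp
qed

lemma unimodal:
  assumes "popt \<le> x" "x \<le> y"
  shows "Rev M y \<le> Rev M x"
proof (cases "q y = 0")
  case True
  then show ?thesis using assms popt_ge1 q_nonneg[of x] by (simp add: Rev_eq)
next
  case False
  then have qy: "0 < q y" using q_nonneg[of y] by simp
  have qx: "0 < q x" using q_anti[of x y] assms qy by simp
  have x1: "1 \<le> x" using assms popt_ge1 by simp
  have lc: "(y - x) * ln (q popt) + (x - popt) * ln (q y) \<le> (y - popt) * ln (q x)"
    using logconc[of popt x y] assms popt_ge1 qy by simp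
  have ll: "(y - x) * ln popt + (x - popt) * ln y \<le> (y - popt) * ln x"
    using ln_concave3[of popt x y] assms popt_ge1 by simp
  have lRy: "ln (Rev M y) \<le> ln (Rev M popt)"
    using opt[of y] qy x1 assms Rpos by (subst ln_le_cancel_iff) (auto simp: Rev_eq)
  have eqx: "ln (Rev M x) = ln x + ln (q x)" using qx x1 by (simp add: Rev_eq ln_mult)
  have eqy: "ln (Rev M y) = ln y + ln (q y)" using qy x1 assms by (simp add: Rev_eq ln_mult)
  have eqo: "ln (Rev M popt) = ln popt + ln (q popt)" using qopt_pos popt_ge1 by (simp add: Rev_eq ln_mult)
  have "(y - x) * ln (Rev M y) \<le> (y - x) * ln (Rev M popt)"
    using lRy assms by (intro mult_left_mono) auto
  then have "(y - popt) * ln (Rev M y) \<le> (y - popt) * ln (Rev M x)"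
    using lc ll eqx eqy eqo by (simp add: algebra_simps)
  then have "y = popt \<or> ln (Rev M y) \<le> ln (Rev M x)"
    using assms by (smt (verit) mult_le_cancel_left)
  then show ?thesis
  proof
    assume "y = popt" then show ?thesis using assms by simp
  next
    assume "ln (Rev M y) \<le> ln (Rev M x)"
    then show ?thesis using qx qy x1 assms by (subst (asm) ln_le_cancel_iff) (auto simp: Rev_eq)
  qed
qed

end



lemma ln_one_minus_upper:
  fixes x :: real assumes x: "0 \<le> x" "x < 1"
  shows "ln (1 - x) \<le> - x - x\<^sup>2 / 2"
proof -
  define g where "g t = ln (1 - t) + t + t\<^sup>2 / 2" for t :: real
  have "g x \<le> g 0"
  proof (rule DERIV_nonpos_imp_nonincreasing[OF x(1)])
    fix t assume t: "0 \<le> t" "t \<le> x"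
    then have t1: "t < 1" using x by simp
    have "(g has_real_derivative (- 1 / (1 - t) + 1 + t)) (at t)"
      unfolding g_def using t1
      by (auto intro!: derivative_eq_intros simp: power2_eq_square field_simps)
    moreover have "- 1 / (1 - t) + 1 + t \<le> 0"
    proof -
      have "- 1 / (1 - t) + 1 + t = - (t * t) / (1 - t)" using t1 by (simp add: field_simps)
      moreover have "0 \<le> t * t / (1 - t)" using t t1 by simp
      ultimately show ?thesis by simp
    qed
    ultimately show "\<exists>y. (g has_real_derivative y) (at t) \<and> y \<le> 0" by blast
  qed
  then show ?thesis unfolding g_def by simp
qed

lemma ln_ratio_upper:
  fixes u :: real assumes u: "0 \<le> u" "u \<le> 1/10"
  shows "ln (1 + u) - ln (1 - u) \<le> 2 * u + 7/10 * u ^ 3"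
proof -
  define g where "g t = ln (1 + t) - ln (1 - t) - 2 * t - 7/10 * t ^ 3" for t :: real
  have "g u \<le> g 0"
  proof (rule DERIV_nonpos_imp_nonincreasing[OF u(1)])
    fix t assume t: "0 \<le> t" "t \<le> u"
    then have t1: "t \<le> 1/10" using u by simp
    have tt: "t * t \<le> 1/10 * t" using t t1 by (intro mult_right_mono) auto
    have p1: "0 < 1 + t" "0 < 1 - t" "t * t < 1" using t t1 tt by auto
    have "(g has_real_derivative (1 / (1 + t) + 1 / (1 - t) - 2 - 21/10 * t\<^sup>2)) (at t)"
      unfolding g_def using p1
      by (auto intro!: derivative_eq_intros simp: power2_eq_square field_simps)
    moreover have "1 / (1 + t) + 1 / (1 - t) - 2 - 21/10 * t\<^sup>2 \<le> 0"
    proof -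
      have "1 / (1 + t) + 1 / (1 - t) - 2 - 21/10 * t\<^sup>2 = t\<^sup>2 * (2 / (1 - t\<^sup>2) - 21/10)"
      proof -
        have "1 - t\<^sup>2 = (1 + t) * (1 - t)" by (simp add: power2_eq_square algebra_simps)
        then show ?thesis using p1 by (simp add: field_simps power2_eq_square)
      qed
      moreover have "2 / (1 - t\<^sup>2) \<le> 21/10"
      proof -
        have "t\<^sup>2 \<le> 1/100" using tt t1 by (simp add: power2_eq_square)
        then show ?thesis by (simp add: field_simps)
      qed
      ultimately show ?thesis by (simp add: mult_nonneg_nonpos)
    qed
    ultimately show "\<exists>y. (g has_real_derivative y) (at t) \<and> y \<le> 0" by blast
  qed
  then show ?thesis unfolding g_def by simp
qed

lemma exp_m1_bounds: "1/3 < exp (-1::real)" "exp (-1::real) \<le> 1 / 2"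
proof -
  have "exp (1::real) < 272/100" by (rule e_less_272)
  then show "1/3 < exp (-1::real)" by (simp add: exp_minus field_simps)
  have "2 \<le> exp (1::real)" using exp_ge_add_one_self[of 1] by simp
  then show "exp (-1::real) \<le> 1/2" by (simp add: exp_minus field_simps)
qed

lemma exp_m1_lower: "367/1000 < exp (-1::real)"
proof -
  have "exp (1::real) < 272/100" by (rule e_less_272)
  then show ?thesis by (simp add: exp_minus field_simps)
qed




locale gridl =
  fixes \<epsilon> :: real
  assumes e0: "0 < \<epsilon>" and e1: "\<epsilon> \<le> 1/10"
begin

definition g :: "nat \<Rightarrow> real" where "g k = (1 + \<epsilon>) ^ k"

lemma g_pos: "0 < g k" unfolding g_def using e0 by simp
lemma g_ge1: "1 \<le> g k" unfolding g_def using e0 by simp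
lemma g_Suc: "g (Suc k) = (1 + \<epsilon>) * g k" unfolding g_def by simp
lemma g_less: "i < j \<Longrightarrow> g i < g j" unfolding g_def using e0 by (simp add: power_strict_increasing)
lemma g_less_iff: "g i < g j \<longleftrightarrow> i < j"
  using g_less by (metis linorder_neq_iff order_less_asym)
lemma g_le_iff: "g i \<le> g j \<longleftrightarrow> i \<le> j"
  using g_less_iff by (meson not_less)
lemma g_inj: "inj g" by (intro injI) (metis g_le_iff order_antisym order_refl)
lemma g_mono: "mono g" unfolding mono_def using g_le_iff by simp
lemma g_add: "g (i + d) = g i * (1 + \<epsilon>) ^ d" unfolding g_def by (simp add: power_add)

lemma card_S: "card (g ` {i..j}) = Suc j - i"
  using g_inj by (simp add: card_image inj_on_subset)

lemma Min_S: "i \<le> j \<Longrightarrow> Min (g ` {i..j}) = g i"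
proof -
  assume ij: "i \<le> j"
  have "Min {i..j} = i" using ij by (intro Min_eqI) auto
  then show ?thesis using mono_Min_commute[OF g_mono, of "{i..j}"] ij by simp
qed
lemma Max_S: "i \<le> j \<Longrightarrow> Max (g ` {i..j}) = g j"
proof -
  assume ij: "i \<le> j"
  have "Max {i..j} = j" using ij by (intro Max_eqI) auto
  then show ?thesis using mono_Max_commute[OF g_mono, of "{i..j}"] ij by simp
qed

lemma Min_gt: 
  assumes "j \<in> K" "finite K" "g j > t"
  shows "Min {p \<in> g ` K. p > t} = g (Min {k \<in> K. g k > t})"
proof -
  have "{p \<in> g ` K. p > t} = g ` {k \<in> K. g k > t}" by auto
  moreover have "finite {k \<in> K. g k > t}" "{k \<in> K. g k > t} \<noteq> {}" using assms by auto
  ultimately show ?thesis using mono_Min_commute[OF g_mono] by simp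
qed

lemma inter_low: "i \<le> k \<Longrightarrow> k \<le> j \<Longrightarrow> g ` {i..j} \<inter> {g i..g k} = g ` {i..k}"
  by (auto simp: g_le_iff)
lemma inter_high: "i \<le> k \<Longrightarrow> k \<le> j \<Longrightarrow> g ` {i..j} \<inter> {g k..g j} = g ` {k..j}"
  by (auto simp: g_le_iff)

definition tA where "tA i j = g i + 0.2 * (g j - g i)"
definition tB where "tB i j = g i + 0.5 * (g j - g i)"
definition kA where "kA i j = Min {k \<in> {i..j}. g k > tA i j}"
definition kB where "kB i j = Min {k \<in> {i..j}. g k > tB i j}"

lemma D_big:
  assumes "i + 19 \<le> j"
  shows "19 * \<epsilon> * g i \<le> g j - g i"
proof -
  have "g j = g i * (1 + \<epsilon>) ^ (j - i)" using g_add[of i "j - i"] assms by simp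
  moreover have "(1 + \<epsilon>) ^ 19 \<le> (1 + \<epsilon>) ^ (j - i)" using assms e0 by (intro power_increasing) auto
  moreover have "1 + real 19 * \<epsilon> \<le> (1 + \<epsilon>) ^ 19" using e0 by (intro Bernoulli_inequality) auto
  ultimately have "g i * (1 + 19 * \<epsilon>) \<le> g j" using g_pos[of i]
    by (metis (no_types, opaque_lifting) dual_order.trans less_eq_real_def mult_left_mono of_nat_numeral)
  then show ?thesis by (simp add: algebra_simps)
qed

lemma kmin_props:
  assumes ij: "i \<le> j" and gt: "g j > t" and ti: "g i \<le> t"
  defines "k \<equiv> Min {k \<in> {i..j}. g k > t}"
  shows "i < k" "k \<le> j" "g k > t" "g k \<le> (1 + \<epsilon>) * t"
proof -
  have fin: "finite {k \<in> {i..j}. g k > t}" and ne: "{k \<in> {i..j}. g k > t} \<noteq> {}" using ij gt by auto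
  have kin: "k \<in> {k \<in> {i..j}. g k > t}" unfolding k_def using Min_in[OF fin ne] .
  then show "g k > t" "k \<le> j" by auto
  have "k \<noteq> i" using kin ti by auto
  then show ik: "i < k" using kin by auto
  have "\<not> g (k - 1) > t"
  proof
    assume "g (k - 1) > t"
    then have "k - 1 \<in> {k \<in> {i..j}. g k > t}" using ik kin by auto
    then have "k \<le> k - 1" unfolding k_def using Min_le[OF fin] by (simp add: k_def)
    then show False using ik by simp
  qed
  moreover have "g k = (1 + \<epsilon>) * g (k - 1)" using g_Suc[of "k - 1"] ik by simp
  ultimately show "g k \<le> (1 + \<epsilon>) * t" using e0 by (simp add: mult_left_mono)
qed

lemma step_geom:
  assumes ij: "i + 19 \<le> j"
  defines "l \<equiv> g i" and "r \<equiv> g j" and "a \<equiv> g (kA i j)" and "b \<equiv> g (kB i j)"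
  shows "i < kA i j" "kA i j < kB i j" "kB i j < j"
    "a > l + 0.2 * (r - l)" "a \<le> (1 + \<epsilon>) * (l + 0.2 * (r - l))"
    "b > l + 0.5 * (r - l)" "b \<le> (1 + \<epsilon>) * (l + 0.5 * (r - l))"
    "19 * \<epsilon> * l \<le> r - l" "1 \<le> l"
    "b - l \<le> 0.8 * (r - l)" "r - a \<le> 0.8 * (r - l)"
proof -
  have D: "19 * \<epsilon> * l \<le> r - l" unfolding l_def r_def by (rule D_big[OF ij])
  then show "19 * \<epsilon> * l \<le> r - l" .
  show l1: "1 \<le> l" unfolding l_def by (rule g_ge1)
  have "0 < 19 * \<epsilon> * l" using e0 l1 by simp
  then have Dpos: "0 < r - l" using D by argo
  have el: "\<epsilon> * l \<le> (r - l) / 19" using D by simp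
  have ij': "i \<le> j" using ij by simp
  have A: "i < kA i j" "kA i j \<le> j" "g (kA i j) > tA i j" "g (kA i j) \<le> (1 + \<epsilon>) * tA i j"
  proof -
    have 1: "g j > tA i j" "g i \<le> tA i j" using Dpos unfolding tA_def l_def r_def by (simp_all add: field_simps)
    show "i < kA i j" "kA i j \<le> j" "g (kA i j) > tA i j" "g (kA i j) \<le> (1 + \<epsilon>) * tA i j"
      unfolding kA_def using kmin_props[OF ij' 1] by auto
  qed
  have B: "i < kB i j" "kB i j \<le> j" "g (kB i j) > tB i j" "g (kB i j) \<le> (1 + \<epsilon>) * tB i j"
  proof -
    have 1: "g j > tB i j" "g i \<le> tB i j" using Dpos unfolding tB_def l_def r_def by (simp_all add: field_simps)
    show "i < kB i j" "kB i j \<le> j" "g (kB i j) > tB i j" "g (kB i j) \<le> (1 + \<epsilon>) * tB i j"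
      unfolding kB_def using kmin_props[OF ij' 1] by auto
  qed
  show "i < kA i j" using A by simp
  show "a > l + 0.2 * (r - l)" "a \<le> (1 + \<epsilon>) * (l + 0.2 * (r - l))"
    using A unfolding a_def l_def r_def tA_def by auto
  show "b > l + 0.5 * (r - l)" "b \<le> (1 + \<epsilon>) * (l + 0.5 * (r - l))"
    using B unfolding b_def l_def r_def tB_def by auto
  have eD: "\<epsilon> * (r - l) \<le> 0.1 * (r - l)" using e1 Dpos by simp
  have bu: "b \<le> l + 0.5 * (r - l) + (r - l) / 19 + (1/20) * (r - l)"
  proof -
    have "b \<le> (1 + \<epsilon>) * (l + 0.5 * (r - l))" using B unfolding b_def l_def r_def tB_def by auto
    also have "\<dots> = l + 0.5 * (r - l) + \<epsilon> * l + 0.5 * (\<epsilon> * (r - l))" by (simp add: field_simps)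
    finally show ?thesis using el eD by linarith
  qed
  have au: "a \<le> l + 0.2 * (r - l) + (r - l) / 19 + (1/50) * (r - l)"
  proof -
    have "a \<le> (1 + \<epsilon>) * (l + 0.2 * (r - l))" using A unfolding a_def l_def r_def tA_def by auto
    also have "\<dots> = l + 0.2 * (r - l) + \<epsilon> * l + 0.2 * (\<epsilon> * (r - l))" by (simp add: field_simps)
    finally show ?thesis using el eD by linarith
  qed
  have "l + 0.5 * (r - l) + (r - l) / 19 + (1/20) * (r - l) < r" using Dpos by (simp add: field_simps)
  then have "b < r" using bu by argo
  then show "kB i j < j" unfolding b_def r_def using g_less_iff by blast
  have "l + 0.2 * (r - l) + (r - l) / 19 + (1/50) * (r - l) < l + 0.5 * (r - l)" using Dpos by (simp add: field_simps)
  then have "a < b" using au B(3) unfolding b_def tB_def l_def r_def by argo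
  then show "kA i j < kB i j" unfolding a_def b_def using g_less_iff by blast
  have "l + 0.5 * (r - l) + (r - l) / 19 + (1/20) * (r - l) - l \<le> 0.8 * (r - l)" using Dpos by (simp add: field_simps)
  then show "b - l \<le> 0.8 * (r - l)" using bu by argo
  show "r - a \<le> 0.8 * (r - l)" using A(3) Dpos unfolding a_def tA_def l_def r_def by argo
qed

end



lemma poly_ineq:
  fixes \<epsilon> :: real assumes e: "0 < \<epsilon>" "\<epsilon> \<le> 1/10"
  shows "(1/2 + 1/19 + \<epsilon>) * (\<epsilon> * (20116/10000 + 7/10 * \<epsilon>\<^sup>2))
         \<le> (3/10 - 1/19 - 2/10 * \<epsilon>) * (49/10 * \<epsilon> + (49/10 * \<epsilon>)\<^sup>2 / 2)"
proof -
  have "\<epsilon> * \<epsilon> \<le> 1/10 * \<epsilon>" using e by (intro mult_right_mono) auto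
  moreover have "1/10 * \<epsilon> \<le> 1/100" using e by simp
  ultimately have "\<epsilon> * \<epsilon> \<le> 1/100" by linarith
  then have e2: "\<epsilon>\<^sup>2 \<le> 1/100" by (simp add: power2_eq_square)
  have L: "(1/2 + 1/19 + \<epsilon>) * (\<epsilon> * (20116/10000 + 7/10 * \<epsilon>\<^sup>2))
        \<le> (1/2 + 1/19 + \<epsilon>) * (\<epsilon> * (20186/10000))"
    using e e2 by (intro mult_left_mono) auto
  have R: "(3/10 - 1/19 - 2/10 * \<epsilon>) * (49/10 * \<epsilon> + (49/10 * \<epsilon>)\<^sup>2 / 2)
       = \<epsilon> * ((3/10 - 1/19 - 2/10 * \<epsilon>) * (49/10) + (3/10 - 1/19 - 2/10 * \<epsilon>) * (2401/200 * \<epsilon>))"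
    by (simp add: power2_eq_square algebra_simps)
  have R2: "(3/10 - 1/19 - 2/10 * \<epsilon>) * (2401/200 * \<epsilon>) \<ge> (3/10 - 1/19 - 2/100) * (2401/200 * \<epsilon>)"
    using e by (intro mult_right_mono) auto
  have "(1/2 + 1/19 + \<epsilon>) * (20186/10000) \<le> (3/10 - 1/19 - 2/10 * \<epsilon>) * (49/10) + (3/10 - 1/19 - 2/10 * \<epsilon>) * (2401/200 * \<epsilon>)"
    using R2 e by argo
  then have "\<epsilon> * ((1/2 + 1/19 + \<epsilon>) * (20186/10000)) \<le> \<epsilon> * ((3/10 - 1/19 - 2/10 * \<epsilon>) * (49/10) + (3/10 - 1/19 - 2/10 * \<epsilon>) * (2401/200 * \<epsilon>))"
    using e by (intro mult_left_mono) auto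
  moreover have "(1/2 + 1/19 + \<epsilon>) * (\<epsilon> * (20186/10000)) = \<epsilon> * ((1/2 + 1/19 + \<epsilon>) * (20186/10000))"
    by simp
  ultimately show ?thesis using L R by linarith
qed

context mhr_opt
begin

lemma extrapolate:
  fixes \<epsilon> l r a b xa xb :: real
  assumes e: "0 < \<epsilon>" "\<epsilon> \<le> 1/10"
    and l1: "1 \<le> l" and D: "19 * \<epsilon> * l \<le> r - l"
    and au: "a \<le> (1 + \<epsilon>) * (l + 0.2 * (r - l))" and bl: "b > l + 0.5 * (r - l)"
    and a1: "1 \<le> a" and ab: "a < b"
    and pb: "b < popt" and pr: "popt < (1 + \<epsilon>) * r"
    and qa: "18/100 \<le> q a" and qb: "18/100 \<le> q b"
    and xa: "\<bar>xa - q a\<bar> \<le> \<epsilon> / 1000" and xb: "\<bar>xb - q b\<bar> \<le> \<epsilon> / 1000"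
    and cond: "(1 - \<epsilon>) * (b * xb) \<le> (1 + \<epsilon>) * (a * xa)"
  shows "(1 - 49/10 * \<epsilon>) * Rev M popt \<le> Rev M b"
proof -
  define \<eta> where "\<eta> = \<epsilon> / 1000"
  define La where "La = ln (q a)"
  define Lb where "Lb = ln (q b)"
  define Lp where "Lp = ln (q popt)"
  have eta0: "0 < \<eta>" "\<eta> \<le> 1/10000" unfolding \<eta>_def using e by auto
  have b1: "1 \<le> b" using a1 ab by simp
  have qa0: "0 < q a" and qb0: "0 < q b" using qa qb by auto
  have lc: "(popt - b) * La + (b - a) * Lp \<le> (popt - a) * Lb"
    unfolding La_def Lb_def Lp_def using logconc[of a b popt] a1 ab pb qopt_pos by simp
  have lc2: "(b - a) * (Lp - Lb) \<le> (popt - b) * (Lb - La)"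
    using lc by (simp add: algebra_simps)
  have xb': "q b - \<eta> \<le> xb" using xb[unfolded abs_le_iff] unfolding \<eta>_def by linarith
  have xa': "xa \<le> q a + \<eta>" using xa[unfolded abs_le_iff] unfolding \<eta>_def by linarith
  have c2: "(1 - \<epsilon>) * (b * (q b - \<eta>)) \<le> (1 + \<epsilon>) * (a * (q a + \<eta>))"
  proof -
    have "(1 - \<epsilon>) * (b * (q b - \<eta>)) \<le> (1 - \<epsilon>) * (b * xb)"
      using xb' e b1 by (intro mult_left_mono) auto
    also have "\<dots> \<le> (1 + \<epsilon>) * (a * xa)" by (rule cond)
    also have "\<dots> \<le> (1 + \<epsilon>) * (a * (q a + \<eta>))"
      using xa' e a1 by (intro mult_left_mono) auto
    finally show ?thesis .
  qed
  have qbe: "17/100 \<le> q b - \<eta>" using qb eta0 by simp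
  have pos1: "0 < (1 - \<epsilon>) * (b * (q b - \<eta>))" using e b1 qbe by simp
  have "ln ((1 - \<epsilon>) * (b * (q b - \<eta>))) \<le> ln ((1 + \<epsilon>) * (a * (q a + \<eta>)))"
    using c2 pos1 by simp
  then have lnc: "ln (1 - \<epsilon>) + ln b + ln (q b - \<eta>) \<le> ln (1 + \<epsilon>) + ln a + ln (q a + \<eta>)"
    using e a1 b1 qbe qa0 eta0 by (simp add: ln_mult)
  have t1: "ln (q a + \<eta>) \<le> La + \<eta> / (18/100)"
  proof -
    have "ln ((q a + \<eta>) / q a) \<le> (q a + \<eta>) / q a - 1" using qa0 eta0 by (intro ln_le_minus_one) auto
    moreover have "(q a + \<eta>) / q a - 1 = \<eta> / q a" using qa0 by (simp add: field_simps)
    moreover have "\<eta> / q a \<le> \<eta> / (18/100)" using qa eta0 by (intro divide_left_mono) auto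
    moreover have "ln ((q a + \<eta>) / q a) = ln (q a + \<eta>) - ln (q a)" using qa0 eta0 by (simp add: ln_div)
    ultimately show ?thesis unfolding La_def by linarith
  qed
  have t2: "Lb - \<eta> / (17/100) \<le> ln (q b - \<eta>)"
  proof -
    have "0 < q b / (q b - \<eta>)" using qbe qb0 by (intro divide_pos_pos) auto
    then have "ln (q b / (q b - \<eta>)) \<le> q b / (q b - \<eta>) - 1" by (intro ln_le_minus_one)
    moreover have "q b / (q b - \<eta>) - 1 = \<eta> / (q b - \<eta>)" using qbe by (simp add: field_simps)
    moreover have "\<eta> / (q b - \<eta>) \<le> \<eta> / (17/100)" using qbe eta0 by (intro divide_left_mono) auto
    moreover have "ln (q b / (q b - \<eta>)) = ln (q b) - ln (q b - \<eta>)" using qbe qb0 by (simp add: ln_div)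
    ultimately show ?thesis unfolding Lb_def by linarith
  qed
  have t3: "ln (1 + \<epsilon>) - ln (1 - \<epsilon>) \<le> 2 * \<epsilon> + 7/10 * \<epsilon> ^ 3" using ln_ratio_upper e by simp
  define T where "T = \<epsilon> * (20116/10000 + 7/10 * \<epsilon>\<^sup>2)"
  have etaT: "\<eta> / (18/100) + \<eta> / (17/100) \<le> \<epsilon> * (116/10000)" unfolding \<eta>_def using e by simp
  have LbLa: "Lb - La \<le> ln a - ln b + T"
  proof -
    have "\<epsilon> ^ 3 = \<epsilon> * \<epsilon>\<^sup>2" by (simp add: power2_eq_square power3_eq_cube)
    then have "2 * \<epsilon> + 7/10 * \<epsilon> ^ 3 + \<epsilon> * (116/10000) = T" unfolding T_def by (simp add: algebra_simps)
    then show ?thesis using lnc t1 t2 t3 etaT by linarith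
  qed
  have T0: "0 \<le> T" unfolding T_def using e by simp
  have lp: "ln popt - ln b \<le> (popt - b) / b"
  proof -
    have "ln (popt / b) \<le> popt / b - 1" using b1 pb by (intro ln_le_minus_one) auto
    then show ?thesis using b1 pb by (simp add: ln_div field_simps)
  qed
  have la: "(b - a) / b \<le> ln b - ln a"
  proof -
    have "ln (a / b) \<le> a / b - 1" using a1 b1 by (intro ln_le_minus_one) auto
    then show ?thesis using a1 b1 by (simp add: ln_div field_simps)
  qed
  have pbab: "(b - a) * (ln popt - ln b) \<le> (popt - b) * (ln b - ln a)"
  proof -
    have "(b - a) * (ln popt - ln b) \<le> (b - a) * ((popt - b) / b)" using lp ab by (intro mult_left_mono) auto
    also have "\<dots> = (popt - b) * ((b - a) / b)" by simp
    also have "\<dots> \<le> (popt - b) * (ln b - ln a)" using la pb by (intro mult_left_mono) auto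
    finally show ?thesis .
  qed
  have main: "(b - a) * ((ln popt + Lp) - (ln b + Lb)) \<le> (popt - b) * T"
  proof -
    have "(popt - b) * (Lb - La) \<le> (popt - b) * (ln a - ln b + T)" using LbLa pb by (intro mult_left_mono) auto
    then show ?thesis using lc2 pbab by (simp add: algebra_simps)
  qed
  define X where "X = (ln popt + Lp) - (ln b + Lb)"
  have Xdef: "X = ln (Rev M popt) - ln (Rev M b)"
    unfolding X_def Lp_def Lb_def using qopt_pos qb0 popt_ge1 b1 by (simp add: Rev_eq ln_mult)
  define Dd where "Dd = r - l"
  have el: "\<epsilon> * l \<le> Dd / 19" using D unfolding Dd_def by simp
  have Dpos: "0 < Dd" using D e l1 unfolding Dd_def by (smt (verit) mult_pos_pos)
  have num: "popt - b \<le> Dd * (1/2 + 1/19 + \<epsilon>)"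
  proof -
    have "popt - b \<le> (1 + \<epsilon>) * r - (l + 0.5 * Dd)" using pr bl unfolding Dd_def by simp
    also have "\<dots> = Dd / 2 + \<epsilon> * l + \<epsilon> * Dd" unfolding Dd_def by (simp add: field_simps)
    also have "\<dots> \<le> Dd * (1/2 + 1/19 + \<epsilon>)" using el by (simp add: algebra_simps)
    finally show ?thesis .
  qed
  have den: "Dd * (3/10 - 1/19 - 2/10 * \<epsilon>) \<le> b - a"
  proof -
    have "(1 + \<epsilon>) * (l + 0.2 * (r - l)) = l + 0.2 * Dd + \<epsilon> * l + 0.2 * (\<epsilon> * Dd)"
      unfolding Dd_def by (simp add: field_simps)
    then have "a \<le> l + 0.2 * Dd + \<epsilon> * l + 0.2 * (\<epsilon> * Dd)" using au by linarith
    then have "b - a \<ge> (l + 0.5 * Dd) - (l + 0.2 * Dd + \<epsilon> * l + 0.2 * (\<epsilon> * Dd))" using bl unfolding Dd_def by linarith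
    moreover have "(l + 0.5 * Dd) - (l + 0.2 * Dd + \<epsilon> * l + 0.2 * (\<epsilon> * Dd)) \<ge> Dd * (3/10 - 1/19 - 2/10 * \<epsilon>)"
      using el by (simp add: algebra_simps)
    ultimately show ?thesis by linarith
  qed
  define x where "x = 49/10 * \<epsilon>"
  have x0: "0 \<le> x" "x < 1" unfolding x_def using e by auto
  have pol: "(1/2 + 1/19 + \<epsilon>) * T \<le> (3/10 - 1/19 - 2/10 * \<epsilon>) * (x + x\<^sup>2 / 2)"
    unfolding T_def x_def using poly_ineq[OF e] by simp
  have Xle: "X \<le> x + x\<^sup>2 / 2"
  proof (rule ccontr)
    assume "\<not> X \<le> x + x\<^sup>2 / 2"
    then have Xg: "x + x\<^sup>2 / 2 < X" by simp
    have xx0: "0 \<le> x + x\<^sup>2 / 2" using x0 by simp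
    have "(b - a) * (x + x\<^sup>2 / 2) < (b - a) * X" using Xg ab by simp
    also have "\<dots> \<le> (popt - b) * T" using main unfolding X_def .
    also have "\<dots> \<le> (Dd * (1/2 + 1/19 + \<epsilon>)) * T" using num T0 by (intro mult_right_mono) auto
    also have "\<dots> = Dd * ((1/2 + 1/19 + \<epsilon>) * T)" by simp
    also have "\<dots> \<le> Dd * ((3/10 - 1/19 - 2/10 * \<epsilon>) * (x + x\<^sup>2 / 2))" using pol Dpos by (intro mult_left_mono) auto
    also have "\<dots> = (Dd * (3/10 - 1/19 - 2/10 * \<epsilon>)) * (x + x\<^sup>2 / 2)" by simp
    also have "\<dots> \<le> (b - a) * (x + x\<^sup>2 / 2)" using den xx0 by (intro mult_right_mono) auto
    finally show False by simp
  qed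
  have "ln (1 - x) \<le> - x - x\<^sup>2 / 2" using ln_one_minus_upper x0 by simp
  then have "ln (1 - x) + ln (Rev M popt) \<le> ln (Rev M b)" using Xle Xdef by simp
  moreover have "ln (1 - x) + ln (Rev M popt) = ln ((1 - x) * Rev M popt)"
    using x0 Rpos by (simp add: ln_mult)
  ultimately have "ln ((1 - x) * Rev M popt) \<le> ln (Rev M b)" by simp
  moreover have "0 < (1 - x) * Rev M popt" using x0 Rpos by simp
  moreover have "0 < Rev M b" using b1 qb0 by (simp add: Rev_eq)
  ultimately show ?thesis unfolding x_def by simp
qed

lemma no_skip:
  fixes \<epsilon> a b xa xb :: real
  assumes e: "0 < \<epsilon>" "\<epsilon> \<le> 1/10"
    and pa: "popt < a" and ab: "a < b" and a1: "1 \<le> a" and qb: "18/100 \<le> q b"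
    and xa: "\<bar>xa - q a\<bar> \<le> \<epsilon> / 1000" and xb: "\<bar>xb - q b\<bar> \<le> \<epsilon> / 1000"
    and cond: "(1 + \<epsilon>) * (a * xa) < (1 - \<epsilon>) * (b * xb)"
  shows False
proof -
  define \<eta> where "\<eta> = \<epsilon> / 1000"
  have b1: "1 \<le> b" using a1 ab by simp
  have RbRa: "Rev M b \<le> Rev M a" using unimodal[of a b] pa ab by simp
  have xb': "xb \<le> q b + \<eta>" using xb[unfolded abs_le_iff] unfolding \<eta>_def by linarith
  have xa': "q a - \<eta> \<le> xa" using xa[unfolded abs_le_iff] unfolding \<eta>_def by linarith
  have "(1 + \<epsilon>) * (a * (q a - \<eta>)) \<le> (1 + \<epsilon>) * (a * xa)"
    using xa' e a1 by (intro mult_left_mono) auto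
  also have "\<dots> < (1 - \<epsilon>) * (b * xb)" by (rule cond)
  also have "\<dots> \<le> (1 - \<epsilon>) * (b * (q b + \<eta>))"
    using xb' e b1 by (intro mult_left_mono) auto
  finally have c: "(1 + \<epsilon>) * (a * (q a - \<eta>)) < (1 - \<epsilon>) * (b * (q b + \<eta>))" .
  have c2: "(1 + \<epsilon>) * Rev M a - (1 + \<epsilon>) * (a * \<eta>) < (1 - \<epsilon>) * Rev M b + (1 - \<epsilon>) * (b * \<eta>)"
    using c by (simp add: Rev_eq algebra_simps)
  have c3: "(1 + \<epsilon>) * Rev M b \<le> (1 + \<epsilon>) * Rev M a" using RbRa e by (intro mult_left_mono) auto
  have c4: "(1 + \<epsilon>) * (a * \<eta>) \<le> (1 + \<epsilon>) * (b * \<eta>)"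
    using ab e unfolding \<eta>_def by (intro mult_left_mono mult_right_mono) auto
  have c5: "2 * \<epsilon> * Rev M b < 2 * (b * \<eta>)" using c2 c3 c4 by (simp add: algebra_simps)
  have "\<epsilon> * (18/100 * b) \<le> \<epsilon> * Rev M b" using qb b1 e by (simp add: Rev_eq mult_left_mono)
  then have "\<epsilon> * (18/100 * b) < b * \<eta>" using c5 by simp
  then show False unfolding \<eta>_def using e b1 by (simp add: field_simps)
qed

end



lemma bind_prob_lb:
  fixes p :: "'a pmf" and f :: "'a \<Rightarrow> 'b pmf"
  assumes bad: "measure_pmf.prob p {x. \<not> G x} \<le> \<rho>"
    and good: "\<And>x. x \<in> set_pmf p \<Longrightarrow> G x \<Longrightarrow> 1 - \<beta> \<le> measure_pmf.prob (f x) E"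
    and b0: "0 \<le> \<beta>"
  shows "1 - \<rho> - \<beta> \<le> measure_pmf.prob (bind_pmf p f) E"
proof (cases "\<beta> \<le> 1")
  case False
  have "0 \<le> \<rho>" using bad measure_nonneg[of p "{x. \<not> G x}"] by linarith
  then show ?thesis using False by (smt (verit) measure_nonneg)
next
  case True
  have r0: "0 \<le> \<rho>" using bad measure_nonneg[of p "{x. \<not> G x}"] by linarith
  have pG: "1 - \<rho> \<le> measure_pmf.prob p {x. G x}"
  proof -
    have "measure_pmf.prob p {x. G x} = 1 - measure_pmf.prob p {x. \<not> G x}"
      using measure_pmf.prob_compl[of "{x. \<not> G x}" p] by (simp add: Compl_eq_Diff_UNIV[symmetric] Collect_neg_eq[symmetric])
    then show ?thesis using bad by simp
  qed
  have "ennreal (1 - \<beta>) * emeasure p {x. G x} = (\<integral>\<^sup>+x. ennreal (1 - \<beta>) * indicator {x. G x} x \<partial>p)"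
    by (subst nn_integral_cmult_indicator) auto
  also have "\<dots> \<le> (\<integral>\<^sup>+x. emeasure (f x) E \<partial>p)"
  proof (rule nn_integral_mono_AE)
    show "AE x in measure_pmf p. ennreal (1 - \<beta>) * indicator {x. G x} x \<le> emeasure (f x) E"
    proof (rule AE_pmfI)
      fix x assume x: "x \<in> set_pmf p"
      show "ennreal (1 - \<beta>) * indicator {x. G x} x \<le> emeasure (f x) E"
      proof (cases "G x")
        case True
        then have "1 - \<beta> \<le> measure_pmf.prob (f x) E" using good x by simp
        then have "ennreal (1 - \<beta>) \<le> ennreal (measure_pmf.prob (f x) E)" by (rule ennreal_leI)
        then show ?thesis using True by (simp add: measure_pmf.emeasure_eq_measure)
      qed simp
    qed
  qed
  also have "\<dots> = emeasure (bind_pmf p f) E" by simp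
  finally have "ennreal ((1 - \<beta>) * measure_pmf.prob p {x. G x}) \<le> ennreal (measure_pmf.prob (bind_pmf p f) E)"
    using True by (simp add: measure_pmf.emeasure_eq_measure ennreal_mult)
  then have A: "(1 - \<beta>) * measure_pmf.prob p {x. G x} \<le> measure_pmf.prob (bind_pmf p f) E"
    using measure_nonneg[of "measure_pmf (bind_pmf p f)" E] by (auto simp: ennreal_le_iff2)
  have "(1 - \<beta>) * (1 - \<rho>) \<le> (1 - \<beta>) * measure_pmf.prob p {x. G x}"
    using pG True by (intro mult_left_mono) auto
  moreover have "1 - \<rho> - \<beta> \<le> (1 - \<beta>) * (1 - \<rho>)" using b0 r0 by (simp add: algebra_simps)
  ultimately show ?thesis using A by linarith
qed

lemma hoeff:
  assumes n: "0 < n" and p: "0 \<le> p" "p \<le> 1" and t: "0 \<le> t"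
  shows "measure_pmf.prob (binomial_pmf n p) {k. \<not> \<bar>real k / real n - p\<bar> \<le> t} \<le> 2 * exp (-2 * real n * t\<^sup>2)"
proof -
  interpret binomial_distribution n p using p by unfold_locales auto
  have "measure_pmf.prob (binomial_pmf n p) {k. \<not> \<bar>real k / real n - p\<bar> \<le> t}
       \<le> measure_pmf.prob (binomial_pmf n p) {k. \<bar>real k / real n - p\<bar> \<ge> t}"
    by (intro measure_pmf.finite_measure_mono) auto
  also have "\<dots> \<le> 2 * exp (-2 * real n * t\<^sup>2)" using prob_abs_ge'[OF n t] by simp
  finally show ?thesis .
qed

lemma bind_prob_lb2:
  fixes p :: "'a pmf" and f :: "'a \<Rightarrow> 'b pmf"
  assumes bad: "1 - \<rho> \<le> measure_pmf.prob p {x. G x}"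
    and good: "\<And>x. x \<in> set_pmf p \<Longrightarrow> G x \<Longrightarrow> 1 - \<beta> \<le> measure_pmf.prob (f x) E"
    and b0: "0 \<le> \<beta>"
  shows "1 - \<rho> - \<beta> \<le> measure_pmf.prob (bind_pmf p f) E"
proof (rule bind_prob_lb[OF _ good b0])
  have "measure_pmf.prob p {x. \<not> G x} = 1 - measure_pmf.prob p {x. G x}"
    using measure_pmf.prob_compl[of "{x. G x}" p] by (simp add: Compl_eq_Diff_UNIV[symmetric] Collect_neg_eq[symmetric])
  then show "measure_pmf.prob p {x. \<not> G x} \<le> \<rho>" using bad by simp
qed auto

definition est_good :: "(real \<Rightarrow> real) \<Rightarrow> real \<Rightarrow> real list \<Rightarrow> (real \<times> real) list \<Rightarrow> bool" where
  "est_good q \<eta> ps L \<longleftrightarrow> map fst L = ps \<and> (\<forall>pe \<in> set L. \<bar>snd pe - fst pe * q (fst pe)\<bar> \<le> \<bar>fst pe\<bar> * \<eta>)"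

lemma est_list_good:
  assumes bad: "\<And>p. p \<in> set ps \<Longrightarrow>
      measure_pmf.prob (binomial_pmf n (q p)) {k. \<not> \<bar>real k / real n - q p\<bar> \<le> \<eta>} \<le> \<rho>"
    and r0: "0 \<le> \<rho>"
  shows "1 - real (length ps) * \<rho> \<le> measure_pmf.prob (est_list q n ps) {L. est_good q \<eta> ps L}"
  using bad
proof (induction ps)
  case Nil
  then show ?case by (simp add: est_good_def)
next
  case (Cons p ps)
  have IH: "1 - real (length ps) * \<rho> \<le> measure_pmf.prob (est_list q n ps) {L. est_good q \<eta> ps L}"
    using Cons by simp
  have "1 - \<rho> - real (length ps) * \<rho> \<le> measure_pmf.prob (est_list q n (p # ps)) {L. est_good q \<eta> (p # ps) L}"
    unfolding est_list.simps
  proof (rule bind_prob_lb)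
    show "measure_pmf.prob (binomial_pmf n (q p)) {k. \<not> \<bar>real k / real n - q p\<bar> \<le> \<eta>} \<le> \<rho>"
      using Cons.prems by simp
    show "0 \<le> real (length ps) * \<rho>" using r0 by simp
    fix k assume k: "\<bar>real k / real n - q p\<bar> \<le> \<eta>"
    have "1 - real (length ps) * \<rho> - 0 \<le> measure_pmf.prob (est_list q n ps \<bind> (\<lambda>rest. return_pmf ((p, p * (real k / real n)) # rest)))
        {L. est_good q \<eta> (p # ps) L}"
    proof (rule bind_prob_lb2[OF IH])
      fix rest assume r: "est_good q \<eta> ps rest"
      have "\<bar>p * (real k / real n) - p * q p\<bar> = \<bar>p\<bar> * \<bar>real k / real n - q p\<bar>"
        by (simp add: abs_mult[symmetric] algebra_simps)
      also have "\<dots> \<le> \<bar>p\<bar> * \<eta>" using k by (intro mult_left_mono) auto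
      finally have "est_good q \<eta> (p # ps) ((p, p * (real k / real n)) # rest)"
        using r unfolding est_good_def by auto
      then show "1 - 0 \<le> measure_pmf.prob (return_pmf ((p, p * (real k / real n)) # rest)) {L. est_good q \<eta> (p # ps) L}"
        by (simp add: indicator_def)
    qed auto
    then show "1 - real (length ps) * \<rho> \<le> measure_pmf.prob (est_list q n ps \<bind> (\<lambda>rest. return_pmf ((p, p * (real k / real n)) # rest)))
        {L. est_good q \<eta> (p # ps) L}" by simp
  qed
  then show ?case by (simp add: algebra_simps)
qed

lemma pick_good:
  assumes "L \<noteq> []"
  shows "\<exists>e. (pick_argmax L, e) \<in> set L \<and> (\<forall>pe \<in> set L. snd pe \<le> e)"
proof -
  define m where "m = Max (snd ` set L)"
  have fin: "finite (snd ` set L)" and ne: "snd ` set L \<noteq> {}" using assms by auto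
  have "m \<in> snd ` set L" unfolding m_def using Max_in[OF fin ne] .
  then obtain p0 where p0: "(p0, m) \<in> set L" by force
  have finP: "finite {p. (p, m) \<in> set L}"
  proof (rule finite_subset)
    show "{p. (p, m) \<in> set L} \<subseteq> fst ` set L" by force
  qed auto
  have neP: "{p. (p, m) \<in> set L} \<noteq> {}" using p0 by auto
  have "pick_argmax L \<in> {p. (p, m) \<in> set L}"
    unfolding pick_argmax_def m_def[symmetric] using Min_in[OF finP neP] .
  moreover have "\<forall>pe \<in> set L. snd pe \<le> m" unfolding m_def using fin by auto
  ultimately show ?thesis by auto
qed




locale algo = mhr_opt + gridl +
  fixes n1 n2 :: nat and \<rho> :: real
  assumes n1: "0 < n1" and n2: "0 < n2" and r0: "0 \<le> \<rho>"
    and bad1: "\<And>p. measure_pmf.prob (binomial_pmf n1 (q p)) {k. \<not> \<bar>real k / real n1 - q p\<bar> \<le> 1/12} \<le> \<rho>"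
    and bad2: "\<And>p. measure_pmf.prob (binomial_pmf n2 (q p)) {k. \<not> \<bar>real k / real n2 - q p\<bar> \<le> \<epsilon>/1000} \<le> \<rho>"
begin

definition UL where "UL fuel st = U_loop q \<epsilon> (exp (-1)) n1 n2 fuel st"

definition Phi :: "nat \<Rightarrow> nat \<Rightarrow> real" where
  "Phi i j = (if Suc j - i < 20 then 0 else 1 + ln ((g j - g i) / (19 * \<epsilon>)) / ln (5/4))"

lemma ln54: "0 < ln (5/4::real)" by simp

lemma Phi_ge1: assumes "i + 19 \<le> j" shows "1 \<le> Phi i j"
proof -
  have D: "19 * \<epsilon> * g i \<le> g j - g i" by (rule D_big[OF assms])
  have "19 * \<epsilon> * 1 \<le> 19 * \<epsilon> * g i" using g_ge1 e0 by (intro mult_left_mono) auto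
  then have "19 * \<epsilon> \<le> g j - g i" using D by linarith
  then have "1 \<le> (g j - g i) / (19 * \<epsilon>)" using e0 by (simp add: field_simps)
  then have "0 \<le> ln ((g j - g i) / (19 * \<epsilon>))" by simp
  then show ?thesis unfolding Phi_def using assms ln54 by simp
qed

lemma Phi_nonneg: "0 \<le> Phi i j"
proof (cases "Suc j - i < 20")
  case True then show ?thesis unfolding Phi_def by simp
next
  case False then have "i + 19 \<le> j" by simp
  then show ?thesis using Phi_ge1 by force
qed

lemma Phi_dec:
  assumes ij: "i + 19 \<le> j" and ij': "i' \<le> j'" and D': "g j' - g i' \<le> 0.8 * (g j - g i)"
  shows "Phi i' j' \<le> Phi i j - 1"
proof (cases "Suc j' - i' < 20")
  case True then show ?thesis unfolding Phi_def using Phi_ge1[OF ij] by (simp add: Phi_def)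
next
  case False
  then have ij2: "i' + 19 \<le> j'" by simp
  have Dp: "19 * \<epsilon> * g i' \<le> g j' - g i'" by (rule D_big[OF ij2])
  have "0 < 19 * \<epsilon> * g i'" using e0 g_pos by simp
  then have Dp0: "0 < g j' - g i'" using Dp by linarith
  have "ln ((g j' - g i') / (19 * \<epsilon>)) \<le> ln ((0.8 * (g j - g i)) / (19 * \<epsilon>))"
  proof -
    have "(g j' - g i') / (19 * \<epsilon>) \<le> (0.8 * (g j - g i)) / (19 * \<epsilon>)"
      using D' e0 by (intro divide_right_mono) auto
    moreover have "0 < (g j' - g i') / (19 * \<epsilon>)" using Dp0 e0 by simp
    ultimately show ?thesis by simp
  qed
  also have "\<dots> = ln (0.8) + ln ((g j - g i) / (19 * \<epsilon>))"
  proof -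
    have p: "0 < (g j - g i) / (19 * \<epsilon>)" using Dp0 D' e0 by simp
    have "(0.8 * (g j - g i)) / (19 * \<epsilon>) = 0.8 * ((g j - g i) / (19 * \<epsilon>))" by simp
    moreover have "ln (0.8 * ((g j - g i) / (19 * \<epsilon>))) = ln 0.8 + ln ((g j - g i) / (19 * \<epsilon>))"
      using ln_mult[of "0.8" "(g j - g i) / (19 * \<epsilon>)"] Dp0 D' e0 by simp
    ultimately show ?thesis by metis
  qed
  also have "ln (0.8::real) = - ln (5/4)" by (simp add: ln_div)
  finally have "ln ((g j' - g i') / (19 * \<epsilon>)) / ln (5/4) \<le> (- ln (5/4) + ln ((g j - g i) / (19 * \<epsilon>))) / ln (5/4)"
    using ln54 by (simp add: divide_right_mono)
  also have "\<dots> = ln ((g j - g i) / (19 * \<epsilon>)) / ln (5/4) - 1" using ln54 by (simp add: field_simps)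
  moreover have "\<not> Suc j - i < 20" "\<not> Suc j' - i' < 20" using ij ij2 by arith+
  ultimately show ?thesis unfolding Phi_def by simp
qed

lemma UL_0: "UL 0 st = return_pmf st" unfolding UL_def by simp

lemma UL_small: "Suc j - i < 20 \<Longrightarrow> UL (Suc fuel) (g ` {i..j}, Sc, Q) = return_pmf (g ` {i..j}, Sc, Q)"
  unfolding UL_def by (simp add: card_S)

lemma UL_step:
  assumes ij: "i + 19 \<le> j"
  shows "UL (Suc fuel) (g ` {i..j}, Sc, Q) =
    bind_pmf (binomial_pmf n1 (q (g (kB i j)))) (\<lambda>k.
      if real k / real n1 < 0.75 * exp (-1) then UL fuel (g ` {i..kB i j}, Sc, Q + n1)
      else bind_pmf (binomial_pmf n2 (q (g (kA i j)))) (\<lambda>ka.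
           bind_pmf (binomial_pmf n2 (q (g (kB i j)))) (\<lambda>kb.
             UL fuel (if (1 + \<epsilon>) * (g (kA i j) * (real ka / real n2)) < (1 - \<epsilon>) * (g (kB i j) * (real kb / real n2))
                      then g ` {kA i j..j} else g ` {i..kB i j},
                      Sc \<union> {g (kA i j), g (kB i j)}, Q + n1 + 2 * n2))))"
proof -
  note G = step_geom[OF ij]
  let ?S = "g ` {i..j}"
  have ij': "i \<le> j" using ij by simp
  have c: "\<not> card ?S < 20" using ij by (simp add: card_S)
  have mn: "Min ?S = g i" and mx: "Max ?S = g j" using Min_S Max_S ij' by auto
  have Dpos: "0 < g j - g i" using g_less[of i j] ij by simp
  have ta: "g i + 0.2 * (g j - g i) < g j" and tb: "g i + 0.5 * (g j - g i) < g j" using Dpos by argo+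
  have a: "Min {p \<in> ?S. p > g i + 0.2 * (g j - g i)} = g (kA i j)"
    unfolding kA_def tA_def using Min_gt[of j "{i..j}", OF _ _ ta] ij' by simp
  have b: "Min {p \<in> ?S. p > g i + 0.5 * (g j - g i)} = g (kB i j)"
    unfolding kB_def tB_def using Min_gt[of j "{i..j}", OF _ _ tb] ij' by simp
  have s1: "?S \<inter> {g i..g (kB i j)} = g ` {i..kB i j}" using G by (intro inter_low) auto
  have s2: "?S \<inter> {g (kA i j)..g j} = g ` {kA i j..j}" using G by (intro inter_high) auto
  show ?thesis unfolding UL_def U_loop.simps(2) Let_def
    by (simp only: c mn mx a b s1 s2 if_False)
qed

lemma next_ok:
  assumes ij: "i + 19 \<le> j"
  shows "i \<le> kB i j" "kB i j \<le> j" "Suc (kB i j) - i < Suc j - i" "Phi i (kB i j) \<le> Phi i j - 1"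
    "i \<le> kA i j" "kA i j \<le> j" "Suc j - kA i j < Suc j - i" "Phi (kA i j) j \<le> Phi i j - 1"
proof -
  note G = step_geom[OF ij]
  show "i \<le> kB i j" "kB i j \<le> j" "Suc (kB i j) - i < Suc j - i"
    "i \<le> kA i j" "kA i j \<le> j" "Suc j - kA i j < Suc j - i" using G by auto
  show "Phi i (kB i j) \<le> Phi i j - 1" using G by (intro Phi_dec[OF ij]) auto
  show "Phi (kA i j) j \<le> Phi i j - 1" using G by (intro Phi_dec[OF ij]) auto
qed

lemma card_add2: "finite Sc \<Longrightarrow> real (card (Sc \<union> {a, b})) \<le> real (card Sc) + 2"
proof -
  assume "finite Sc"
  then have "card (Sc \<union> {a, b}) \<le> card Sc + card {a, b}" by (intro card_Un_le)
  moreover have "card {a, b} \<le> 2" by (simp add: card_insert_if)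
  ultimately show ?thesis by linarith
qed

definition DetOK :: "nat \<Rightarrow> nat \<Rightarrow> real set \<Rightarrow> nat \<Rightarrow> real set \<times> real set \<times> nat \<Rightarrow> bool" where
  "DetOK i j Sc Q x \<longleftrightarrow> (\<exists>i' j'. fst x = g ` {i'..j'} \<and> i' \<le> j' \<and> Suc j' - i' < 20) \<and>
     finite (fst (snd x)) \<and> Sc \<subseteq> fst (snd x) \<and>
     real (card (fst (snd x))) \<le> real (card Sc) + 2 * Phi i j \<and>
     real (snd (snd x)) \<le> real Q + real (n1 + 2 * n2) * Phi i j"

lemma DetOK_mono:
  assumes "DetOK i' j' Sc' Q' x" "Sc \<subseteq> Sc'" "real (card Sc') \<le> real (card Sc) + 2"
    "real Q' \<le> real Q + real (n1 + 2 * n2)" "Phi i' j' \<le> Phi i j - 1"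
  shows "DetOK i j Sc Q x"
proof -
  have "real (card (fst (snd x))) \<le> real (card Sc') + 2 * Phi i' j'" using assms(1) unfolding DetOK_def by blast
  also have "\<dots> \<le> real (card Sc) + 2 * Phi i j" using assms(3,5) by linarith
  finally have c: "real (card (fst (snd x))) \<le> real (card Sc) + 2 * Phi i j" .
  have "real (snd (snd x)) \<le> real Q' + real (n1 + 2 * n2) * Phi i' j'" using assms(1) unfolding DetOK_def by blast
  also have "\<dots> \<le> real Q' + real (n1 + 2 * n2) * (Phi i j - 1)"
    using assms(5) by (intro add_left_mono mult_left_mono) auto
  also have "\<dots> \<le> real Q + real (n1 + 2 * n2) * Phi i j" using assms(4) by (simp add: algebra_simps)
  finally show ?thesis using assms(1,2) c unfolding DetOK_def by blast
qed

lemma UL_det: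
  "i \<le> j \<Longrightarrow> Suc j - i \<le> fuel \<Longrightarrow> finite Sc \<Longrightarrow> x \<in> set_pmf (UL fuel (g ` {i..j}, Sc, Q)) \<Longrightarrow>
   DetOK i j Sc Q x"
proof (induction fuel arbitrary: i j Sc Q x)
  case 0 then show ?case by simp
next
  case (Suc fuel)
  show ?case
  proof (cases "Suc j - i < 20")
    case True
    then have "x = (g ` {i..j}, Sc, Q)" using Suc.prems UL_small by simp
    then show ?thesis unfolding DetOK_def using True Suc.prems Phi_nonneg[of i j] by auto
  next
    case False
    then have ij: "i + 19 \<le> j" by simp
    note N = next_ok[OF ij]
    from Suc.prems(4) obtain k where xk: "x \<in> set_pmf (if real k / real n1 < 0.75 * exp (-1) then UL fuel (g ` {i..kB i j}, Sc, Q + n1)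
      else bind_pmf (binomial_pmf n2 (q (g (kA i j)))) (\<lambda>ka.
           bind_pmf (binomial_pmf n2 (q (g (kB i j)))) (\<lambda>kb.
             UL fuel (if (1 + \<epsilon>) * (g (kA i j) * (real ka / real n2)) < (1 - \<epsilon>) * (g (kB i j) * (real kb / real n2))
                      then g ` {kA i j..j} else g ` {i..kB i j},
                      Sc \<union> {g (kA i j), g (kB i j)}, Q + n1 + 2 * n2))))"
      unfolding UL_step[OF ij] by auto
    show ?thesis
    proof (cases "real k / real n1 < 0.75 * exp (-1)")
      case True
      then have "x \<in> set_pmf (UL fuel (g ` {i..kB i j}, Sc, Q + n1))" using xk by simp
      then have "DetOK i (kB i j) Sc (Q + n1) x" using Suc.IH[of i "kB i j" Sc x "Q + n1"] N Suc.prems by auto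
      then show ?thesis by (rule DetOK_mono) (use N in auto)
    next
      case False
      then obtain ka kb where xk2: "x \<in> set_pmf (UL fuel (if (1 + \<epsilon>) * (g (kA i j) * (real ka / real n2)) < (1 - \<epsilon>) * (g (kB i j) * (real kb / real n2))
                      then g ` {kA i j..j} else g ` {i..kB i j},
                      Sc \<union> {g (kA i j), g (kB i j)}, Q + n1 + 2 * n2))" using xk by auto
      let ?Sc = "Sc \<union> {g (kA i j), g (kB i j)}"
      have fin: "finite ?Sc" using Suc.prems by simp
      have cs: "real (card ?Sc) \<le> real (card Sc) + 2" using card_add2 Suc.prems by simp
      show ?thesis
      proof (cases "(1 + \<epsilon>) * (g (kA i j) * (real ka / real n2)) < (1 - \<epsilon>) * (g (kB i j) * (real kb / real n2))")
        case True
        then have "x \<in> set_pmf (UL fuel (g ` {kA i j..j}, ?Sc, Q + n1 + 2 * n2))" using xk2 by simp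
        then have "DetOK (kA i j) j ?Sc (Q + n1 + 2 * n2) x"
          using Suc.IH[of "kA i j" j ?Sc x "Q + n1 + 2 * n2"] N Suc.prems fin by auto
        then show ?thesis by (rule DetOK_mono) (use N cs in auto)
      next
        case False
        then have "x \<in> set_pmf (UL fuel (g ` {i..kB i j}, ?Sc, Q + n1 + 2 * n2))" using xk2 by simp
        then have "DetOK i (kB i j) ?Sc (Q + n1 + 2 * n2) x"
          using Suc.IH[of i "kB i j" ?Sc x "Q + n1 + 2 * n2"] N Suc.prems fin by auto
        then show ?thesis by (rule DetOK_mono) (use N cs in auto)
      qed
    qed
  qed
qed

lemma c75: "0.75 * exp (-1) = 3/4 * exp (-1::real)" by simp

definition Good :: "nat \<Rightarrow> nat \<Rightarrow> real set \<Rightarrow> bool" where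
  "Good i j Sc \<longleftrightarrow> 18/100 \<le> q (g i) \<and> finite Sc \<and> (\<forall>y\<in>Sc. 18/100 \<le> q y \<and> 1 \<le> y) \<and>
     ((\<exists>y\<in>Sc. (1 - 49/10 * \<epsilon>) * Rev M popt \<le> Rev M y) \<or> (g i \<le> popt \<and> popt < (1 + \<epsilon>) * g j))"

definition FinalE :: "(real set \<times> real set \<times> nat) set" where
  "FinalE = {x. \<exists>i j. fst x = g ` {i..j} \<and> i \<le> j \<and> Suc j - i < 20 \<and> Good i j (fst (snd x))}"

lemma pres1:
  assumes ij: "i + 19 \<le> j" and G: "Good i j Sc" and x1: "\<bar>x1 - q (g (kB i j))\<bar> \<le> 1/12"
    and lt: "x1 < 0.75 * exp (-1)"
  shows "Good i (kB i j) Sc"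
proof -
  have "q (g (kB i j)) \<le> x1 + 1/12" using x1[unfolded abs_le_iff] by linarith
  then have "q (g (kB i j)) < exp (-1)" using lt[unfolded c75] exp_m1_bounds(1) by linarith
  then have "q (g (kB i j)) < q popt" using qopt_ge by simp
  then have "popt < g (kB i j)" using q_anti[of "g (kB i j)" popt] by force
  moreover have "g (kB i j) \<le> (1 + \<epsilon>) * g (kB i j)" using e0 g_pos[of "kB i j"] by simp
  ultimately show ?thesis using G unfolding Good_def by auto
qed

lemma pres2:
  assumes ij: "i + 19 \<le> j" and G: "Good i j Sc" and x1: "\<bar>x1 - q (g (kB i j))\<bar> \<le> 1/12"
    and ge: "\<not> x1 < 0.75 * exp (-1)"
    and xa: "\<bar>xa - q (g (kA i j))\<bar> \<le> \<epsilon> / 1000" and xb: "\<bar>xb - q (g (kB i j))\<bar> \<le> \<epsilon> / 1000"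
  shows "(1 + \<epsilon>) * (g (kA i j) * xa) < (1 - \<epsilon>) * (g (kB i j) * xb) \<Longrightarrow>
           Good (kA i j) j (Sc \<union> {g (kA i j), g (kB i j)})"
    and "\<not> (1 + \<epsilon>) * (g (kA i j) * xa) < (1 - \<epsilon>) * (g (kB i j) * xb) \<Longrightarrow>
           Good i (kB i j) (Sc \<union> {g (kA i j), g (kB i j)})"
proof -
  note Gm = step_geom[OF ij]
  define a where "a = g (kA i j)"
  define b where "b = g (kB i j)"
  have ab: "a < b" unfolding a_def b_def using Gm g_less by simp
  have a1: "1 \<le> a" "1 \<le> b" unfolding a_def b_def using g_ge1 by auto
  have qb: "18/100 \<le> q b"
  proof -
    have "3/4 * (367/1000) \<le> 3/4 * exp (-1::real)" using exp_m1_lower by simp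
    moreover have "x1 - 1/12 \<le> q (g (kB i j))" using x1[unfolded abs_le_iff] by linarith
    ultimately show ?thesis using ge[unfolded c75] unfolding b_def by linarith
  qed
  have qa: "18/100 \<le> q a" using qb q_anti[of a b] ab by simp
  have Sc': "\<forall>y\<in>Sc \<union> {a, b}. 18/100 \<le> q y \<and> 1 \<le> y" using G qa qb a1 unfolding Good_def by auto
  have fin: "finite (Sc \<union> {a, b})" using G unfolding Good_def by simp
  show "Good (kA i j) j (Sc \<union> {g (kA i j), g (kB i j)})"
    if cond: "(1 + \<epsilon>) * (g (kA i j) * xa) < (1 - \<epsilon>) * (g (kB i j) * xb)"
  proof -
    have "(\<exists>y\<in>Sc \<union> {a, b}. (1 - 49/10 * \<epsilon>) * Rev M popt \<le> Rev M y) \<or> (a \<le> popt \<and> popt < (1 + \<epsilon>) * g j)"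
    proof (cases "\<exists>y\<in>Sc. (1 - 49/10 * \<epsilon>) * Rev M popt \<le> Rev M y")
      case True then show ?thesis by auto
    next
      case False
      then have B: "g i \<le> popt \<and> popt < (1 + \<epsilon>) * g j" using G unfolding Good_def by auto
      have "a \<le> popt"
      proof (rule ccontr)
        assume "\<not> a \<le> popt"
        then have "popt < a" by simp
        then show False
          by (rule no_skip[OF e0 e1 _ ab a1(1) qb xa[folded a_def] xb[folded b_def] cond[folded a_def b_def]])
      qed
      then show ?thesis using B by auto
    qed
    then show ?thesis using qa Sc' fin unfolding Good_def a_def b_def by auto
  qed
  show "Good i (kB i j) (Sc \<union> {g (kA i j), g (kB i j)})"
    if cond: "\<not> (1 + \<epsilon>) * (g (kA i j) * xa) < (1 - \<epsilon>) * (g (kB i j) * xb)"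
  proof -
    have "(\<exists>y\<in>Sc \<union> {a, b}. (1 - 49/10 * \<epsilon>) * Rev M popt \<le> Rev M y) \<or> (g i \<le> popt \<and> popt < (1 + \<epsilon>) * b)"
    proof (cases "\<exists>y\<in>Sc. (1 - 49/10 * \<epsilon>) * Rev M popt \<le> Rev M y")
      case True then show ?thesis by auto
    next
      case False
      then have B: "g i \<le> popt \<and> popt < (1 + \<epsilon>) * g j" using G unfolding Good_def by auto
      show ?thesis
      proof (cases "popt < (1 + \<epsilon>) * b")
        case True then show ?thesis using B by auto
      next
        case False
        moreover have "b < (1 + \<epsilon>) * b" using e0 a1 by simp
        ultimately have pb: "b < popt" by linarith
        have "(1 - 49/10 * \<epsilon>) * Rev M popt \<le> Rev M b"
        proof (rule extrapolate[OF e0 e1 _ _ _ _ a1(1) ab pb _ qa qb xa[folded a_def] xb[folded b_def]])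
          show "1 \<le> g i" by (rule g_ge1)
          show "19 * \<epsilon> * g i \<le> g j - g i" using Gm by simp
          show "a \<le> (1 + \<epsilon>) * (g i + 0.2 * (g j - g i))" using Gm unfolding a_def by simp
          show "g i + 0.5 * (g j - g i) < b" using Gm unfolding b_def by simp
          show "popt < (1 + \<epsilon>) * g j" using B by simp
          show "(1 - \<epsilon>) * (b * xb) \<le> (1 + \<epsilon>) * (a * xa)" using cond unfolding a_def b_def by simp
        qed
        then show ?thesis by auto
      qed
    qed
    then show ?thesis using G Sc' fin unfolding Good_def a_def b_def by auto
  qed
qed

lemma UL_prob:
  "i \<le> j \<Longrightarrow> Suc j - i \<le> fuel \<Longrightarrow> Good i j Sc \<Longrightarrow>
   1 - 3 * \<rho> * Phi i j \<le> measure_pmf.prob (UL fuel (g ` {i..j}, Sc, Q)) FinalE"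
proof (induction fuel arbitrary: i j Sc Q)
  case 0 then show ?case by simp
next
  case (Suc fuel)
  show ?case
  proof (cases "Suc j - i < 20")
    case True
    then have "UL (Suc fuel) (g ` {i..j}, Sc, Q) = return_pmf (g ` {i..j}, Sc, Q)" by (rule UL_small)
    moreover have "(g ` {i..j}, Sc, Q) \<in> FinalE" unfolding FinalE_def using True Suc.prems by auto
    ultimately have "measure_pmf.prob (UL (Suc fuel) (g ` {i..j}, Sc, Q)) FinalE = 1" by simp
    moreover have "0 \<le> 3 * \<rho> * Phi i j" using r0 Phi_nonneg by simp
    ultimately show ?thesis by simp
  next
    case False
    then have ij: "i + 19 \<le> j" by simp
    note N = next_ok[OF ij]
    have P1: "1 \<le> Phi i j" by (rule Phi_ge1[OF ij])
    define P where "P = Phi i j"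
    have rP: "\<rho> \<le> \<rho> * P" using r0 P1 unfolding P_def by (metis mult_left_mono mult.right_neutral)
    have "1 - \<rho> - (3 * \<rho> * P - \<rho>) \<le> measure_pmf.prob (UL (Suc fuel) (g ` {i..j}, Sc, Q)) FinalE"
      unfolding UL_step[OF ij]
    proof (rule bind_prob_lb[OF bad1])
      show "0 \<le> 3 * \<rho> * P - \<rho>" using rP r0 by linarith
      fix k assume kg: "\<bar>real k / real n1 - q (g (kB i j))\<bar> \<le> 1/12"
      show "1 - (3 * \<rho> * P - \<rho>) \<le> measure_pmf.prob (if real k / real n1 < 0.75 * exp (-1) then UL fuel (g ` {i..kB i j}, Sc, Q + n1)
      else bind_pmf (binomial_pmf n2 (q (g (kA i j)))) (\<lambda>ka.
           bind_pmf (binomial_pmf n2 (q (g (kB i j)))) (\<lambda>kb.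
             UL fuel (if (1 + \<epsilon>) * (g (kA i j) * (real ka / real n2)) < (1 - \<epsilon>) * (g (kB i j) * (real kb / real n2))
                      then g ` {kA i j..j} else g ` {i..kB i j},
                      Sc \<union> {g (kA i j), g (kB i j)}, Q + n1 + 2 * n2)))) FinalE"
      proof (cases "real k / real n1 < 0.75 * exp (-1)")
        case True
        have G': "Good i (kB i j) Sc" by (rule pres1[OF ij Suc.prems(3) kg True])
        have "1 - 3 * \<rho> * Phi i (kB i j) \<le> measure_pmf.prob (UL fuel (g ` {i..kB i j}, Sc, Q + n1)) FinalE"
          using Suc.IH[of i "kB i j" Sc "Q + n1"] N Suc.prems G' by simp
        moreover have "3 * \<rho> * Phi i (kB i j) \<le> 3 * \<rho> * (P - 1)"
          using N r0 unfolding P_def by (intro mult_left_mono) auto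
        ultimately show ?thesis using True r0 by (simp add: algebra_simps)
      next
        case False
        let ?Sc = "Sc \<union> {g (kA i j), g (kB i j)}"
        have "1 - \<rho> - (3 * \<rho> * P - 2 * \<rho>) \<le> measure_pmf.prob (bind_pmf (binomial_pmf n2 (q (g (kA i j)))) (\<lambda>ka.
           bind_pmf (binomial_pmf n2 (q (g (kB i j)))) (\<lambda>kb.
             UL fuel (if (1 + \<epsilon>) * (g (kA i j) * (real ka / real n2)) < (1 - \<epsilon>) * (g (kB i j) * (real kb / real n2))
                      then g ` {kA i j..j} else g ` {i..kB i j},
                      ?Sc, Q + n1 + 2 * n2)))) FinalE"
        proof (rule bind_prob_lb[OF bad2])
          show "0 \<le> 3 * \<rho> * P - 2 * \<rho>" using rP r0 by linarith
          fix ka assume kag: "\<bar>real ka / real n2 - q (g (kA i j))\<bar> \<le> \<epsilon> / 1000"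
          have "1 - \<rho> - (3 * \<rho> * P - 3 * \<rho>) \<le> measure_pmf.prob (bind_pmf (binomial_pmf n2 (q (g (kB i j)))) (\<lambda>kb.
             UL fuel (if (1 + \<epsilon>) * (g (kA i j) * (real ka / real n2)) < (1 - \<epsilon>) * (g (kB i j) * (real kb / real n2))
                      then g ` {kA i j..j} else g ` {i..kB i j},
                      ?Sc, Q + n1 + 2 * n2))) FinalE"
          proof (rule bind_prob_lb[OF bad2])
            show "0 \<le> 3 * \<rho> * P - 3 * \<rho>" using rP r0 by linarith
            fix kb assume kbg: "\<bar>real kb / real n2 - q (g (kB i j))\<bar> \<le> \<epsilon> / 1000"
            note PR = pres2[OF ij Suc.prems(3) kg False kag kbg]
            show "1 - (3 * \<rho> * P - 3 * \<rho>) \<le> measure_pmf.prob (UL fuel (if (1 + \<epsilon>) * (g (kA i j) * (real ka / real n2)) < (1 - \<epsilon>) * (g (kB i j) * (real kb / real n2))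
                      then g ` {kA i j..j} else g ` {i..kB i j},
                      ?Sc, Q + n1 + 2 * n2)) FinalE"
            proof (cases "(1 + \<epsilon>) * (g (kA i j) * (real ka / real n2)) < (1 - \<epsilon>) * (g (kB i j) * (real kb / real n2))")
              case True
              have "1 - 3 * \<rho> * Phi (kA i j) j \<le> measure_pmf.prob (UL fuel (g ` {kA i j..j}, ?Sc, Q + n1 + 2 * n2)) FinalE"
                using Suc.IH[of "kA i j" j ?Sc "Q + n1 + 2 * n2"] N Suc.prems PR(1)[OF True] by simp
              moreover have "3 * \<rho> * Phi (kA i j) j \<le> 3 * \<rho> * (P - 1)"
                using N r0 unfolding P_def by (intro mult_left_mono) auto
              ultimately show ?thesis using True by (simp add: algebra_simps)
            next
              case False
              have "1 - 3 * \<rho> * Phi i (kB i j) \<le> measure_pmf.prob (UL fuel (g ` {i..kB i j}, ?Sc, Q + n1 + 2 * n2)) FinalE"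
                using Suc.IH[of i "kB i j" ?Sc "Q + n1 + 2 * n2"] N Suc.prems PR(2)[OF False] by simp
              moreover have "3 * \<rho> * Phi i (kB i j) \<le> 3 * \<rho> * (P - 1)"
                using N r0 unfolding P_def by (intro mult_left_mono) auto
              ultimately show ?thesis using False by (simp add: algebra_simps)
            qed
          qed
          then show "1 - (3 * \<rho> * P - 2 * \<rho>) \<le> measure_pmf.prob (bind_pmf (binomial_pmf n2 (q (g (kB i j)))) (\<lambda>kb.
             UL fuel (if (1 + \<epsilon>) * (g (kA i j) * (real ka / real n2)) < (1 - \<epsilon>) * (g (kB i j) * (real kb / real n2))
                      then g ` {kA i j..j} else g ` {i..kB i j},
                      ?Sc, Q + n1 + 2 * n2))) FinalE" by (simp add: algebra_simps)
        qed
        then show ?thesis using False by (simp add: algebra_simps)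
      qed
    qed
    then show ?thesis unfolding P_def by (simp add: algebra_simps)
  qed
qed

end



context algo
begin

lemma pow18: "(1 + \<epsilon>) ^ 18 \<le> 56/10"
proof -
  have "(1 + \<epsilon>) ^ 18 \<le> (11/10::real) ^ 18" using e0 e1 by (intro power_mono) auto
  also have "\<dots> = 11^18 / 10^18" by (simp only: power_divide)
  also have "\<dots> \<le> 56/10" by simp
  finally show ?thesis .
qed

lemma final_good:
  assumes x: "(S, Sc, Q) \<in> FinalE"
    and L: "est_good q (\<epsilon> / 1000) (sorted_list_of_set (Sc \<union> S)) L"
  shows "(1 - 5 * \<epsilon>) * Rev M popt \<le> Rev M (pick_argmax L)"
proof -
  obtain i j where S: "S = g ` {i..j}" and ij: "i \<le> j" "Suc j - i < 20" and G: "Good i j Sc"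
    using x unfolding FinalE_def by auto
  define T where "T = Sc \<union> S"
  define R where "R = Rev M popt"
  have R1: "1 \<le> R" unfolding R_def by (rule Rpos)
  have finT: "finite T" unfolding T_def S using G unfolding Good_def by auto
  have setL: "fst ` set L = T" using L finT unfolding est_good_def T_def
    by (metis list.set_map set_sorted_list_of_set)
  have LT: "\<And>pe. pe \<in> set L \<Longrightarrow> \<bar>snd pe - fst pe * q (fst pe)\<bar> \<le> \<bar>fst pe\<bar> * (\<epsilon> / 1000)"
    using L unfolding est_good_def by blast
  have Tne: "T \<noteq> {}" unfolding T_def S using ij by auto
  then have Lne: "L \<noteq> []" using setL by auto
  have gi: "g i \<le> R / (18/100)"
  proof -
    have "g i * (18/100) \<le> g i * q (g i)" using G g_pos[of i] unfolding Good_def by (intro mult_left_mono) auto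
    also have "\<dots> \<le> R" unfolding R_def using opt[of "g i"] by (simp add: Rev_eq)
    finally show ?thesis by (simp add: field_simps)
  qed
  have bound: "\<And>y. y \<in> T \<Longrightarrow> 1 \<le> y \<and> y \<le> 35 * R"
  proof -
    fix y assume "y \<in> T"
    then consider "y \<in> Sc" | "y \<in> S" unfolding T_def by auto
    then show "1 \<le> y \<and> y \<le> 35 * R"
    proof cases
      case 1
      then have qy: "18/100 \<le> q y" and y1: "1 \<le> y" using G unfolding Good_def by auto
      have "y * (18/100) \<le> y * q y" using qy y1 by (intro mult_left_mono) auto
      also have "\<dots> \<le> R" unfolding R_def using opt[of y] by (simp add: Rev_eq)
      finally have "y \<le> R / (18/100)" by (simp add: field_simps)
      then show ?thesis using y1 R1 by simp
    next
      case 2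
      then obtain k where k: "k \<in> {i..j}" "y = g k" using S by auto
      have "k \<le> i + 18" using k ij by arith
      then have "y \<le> g (i + 18)" using k by (simp add: g_le_iff)
      also have "\<dots> = g i * (1 + \<epsilon>) ^ 18" by (rule g_add)
      also have "\<dots> \<le> (R / (18/100)) * (56/10)" using gi pow18 g_pos[of i] e0
        by (intro mult_mono) auto
      also have "\<dots> \<le> 35 * R" using R1 by simp
      finally show ?thesis using k g_ge1 by simp
    qed
  qed
  have "\<exists>xg\<in>T. (1 - 49/10 * \<epsilon>) * R \<le> Rev M xg"
  proof (cases "\<exists>y\<in>Sc. (1 - 49/10 * \<epsilon>) * R \<le> Rev M y")
    case True then show ?thesis unfolding T_def by auto
  next
    case False
    then have B: "g i \<le> popt" "popt < (1 + \<epsilon>) * g j" using G unfolding Good_def R_def by auto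
    define K where "K = {k \<in> {i..j}. g k \<le> popt}"
    have finK: "finite K" and neK: "K \<noteq> {}" unfolding K_def using B ij by auto
    define ks where "ks = Max K"
    have ksK: "ks \<in> K" unfolding ks_def using Max_in[OF finK neK] .
    then have ks: "i \<le> ks" "ks \<le> j" "g ks \<le> popt" unfolding K_def by auto
    have up: "popt < (1 + \<epsilon>) * g ks"
    proof (cases "ks = j")
      case True then show ?thesis using B by simp
    next
      case False
      have "\<not> g (Suc ks) \<le> popt"
      proof
        assume "g (Suc ks) \<le> popt"
        then have "Suc ks \<in> K" unfolding K_def using ks False by auto
        then have "Suc ks \<le> ks" unfolding ks_def using Max_ge[OF finK] by blast
        then show False by simp
      qed
      then show ?thesis using g_Suc[of ks] by simp
    qed
    have "Rev M popt = popt * q popt" by (simp add: Rev_eq)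
    also have "\<dots> \<le> ((1 + \<epsilon>) * g ks) * q (g ks)"
      using up q_anti[OF ks(3)] qopt_pos popt_ge1 by (intro mult_mono) auto
    finally have "R \<le> (1 + \<epsilon>) * Rev M (g ks)" unfolding R_def by (simp add: Rev_eq)
    then have "R / (1 + \<epsilon>) \<le> Rev M (g ks)" using e0 by (simp add: field_simps)
    moreover have "(1 - 49/10 * \<epsilon>) * R \<le> R / (1 + \<epsilon>)"
    proof -
      have "(1 - \<epsilon>) * (1 + \<epsilon>) \<le> 1" by (simp add: algebra_simps)
      then have "1 - \<epsilon> \<le> 1 / (1 + \<epsilon>)" using e0 by (simp add: field_simps)
      then have "(1 - 49/10 * \<epsilon>) \<le> 1 / (1 + \<epsilon>)" using e0 by simp
      then have "(1 - 49/10 * \<epsilon>) * R \<le> (1 / (1 + \<epsilon>)) * R" using R1 by (intro mult_right_mono) auto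
      then show ?thesis by simp
    qed
    moreover have "g ks \<in> T" unfolding T_def S using ks by auto
    ultimately show ?thesis unfolding R_def by force
  qed
  then obtain xg where xgT: "xg \<in> T" and xgR: "(1 - 49/10 * \<epsilon>) * R \<le> Rev M xg" by blast
  obtain e where pe: "(pick_argmax L, e) \<in> set L" and emax: "\<forall>pe\<in>set L. snd pe \<le> e"
    using pick_good[OF Lne] by blast
  define p where "p = pick_argmax L"
  have pT: "p \<in> T" using pe setL unfolding p_def by force
  obtain ex where xe: "(xg, ex) \<in> set L" using xgT setL by force
  have exe: "ex \<le> e" using emax xe by force
  have b1: "1 \<le> p" "p \<le> 35 * R" using bound[OF pT] by auto
  have b2: "1 \<le> xg" "xg \<le> 35 * R" using bound[OF xgT] by auto
  have Ep: "\<bar>e - p * q p\<bar> \<le> p * (\<epsilon> / 1000)" using LT[OF pe] b1 unfolding p_def by simp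
  have Ex: "\<bar>ex - xg * q xg\<bar> \<le> xg * (\<epsilon> / 1000)" using LT[OF xe] b2 by simp
  have "p * (\<epsilon> / 1000) \<le> 35 * R * (\<epsilon> / 1000)" using b1 e0 by (intro mult_right_mono) auto
  moreover have "xg * (\<epsilon> / 1000) \<le> 35 * R * (\<epsilon> / 1000)" using b2 e0 by (intro mult_right_mono) auto
  ultimately have "Rev M xg - 70 * R * (\<epsilon> / 1000) \<le> Rev M p"
    using Ep Ex exe unfolding Rev_eq abs_le_iff by linarith
  moreover have "(1 - 5 * \<epsilon>) * R \<le> (1 - 49/10 * \<epsilon>) * R - 70 * R * (\<epsilon> / 1000)"
  proof -
    have "0 \<le> R * \<epsilon>" using R1 e0 by simp
    then show ?thesis by (simp add: algebra_simps)
  qed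
  ultimately show ?thesis using xgR unfolding R_def p_def by linarith
qed

lemma card_T:
  assumes "DetOK 0 N {} 0 (S, Sc, Q)"
  shows "real (card (Sc \<union> S)) \<le> 2 * Phi 0 N + 19" "finite (Sc \<union> S)"
proof -
  obtain i' j' where S: "S = g ` {i'..j'}" "i' \<le> j'" "Suc j' - i' < 20"
    using assms unfolding DetOK_def by auto
  have cS: "card S \<le> 19" using S card_S by simp
  have cSc: "real (card Sc) \<le> 2 * Phi 0 N" and fSc: "finite Sc" using assms unfolding DetOK_def by auto
  show "finite (Sc \<union> S)" using fSc S by simp
  have "card (Sc \<union> S) \<le> card Sc + card S" by (rule card_Un_le)
  then show "real (card (Sc \<union> S)) \<le> 2 * Phi 0 N + 19" using cS cSc by linarith
qed

lemma alg_main: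
  assumes N: "H < g (Suc N)"
  defines "Dst \<equiv> bind_pmf (UL (Suc N) (g ` {0..N}, {}, 0)) (\<lambda>(S, Sc, Q).
       (let Sc' = Sc \<union> S in
        bind_pmf (est_list q n2 (sorted_list_of_set Sc')) (\<lambda>L.
          return_pmf (pick_argmax L, Q + n2 * card Sc'))))"
  shows "1 - 3 * \<rho> * Phi 0 N - (2 * Phi 0 N + 19) * \<rho> \<le>
           measure_pmf.prob Dst {x. (1 - 5 * \<epsilon>) * Rev M popt \<le> Rev M (fst x)}"
    and "\<forall>x\<in>set_pmf Dst. real (snd x) \<le> real (n1 + 2 * n2) * Phi 0 N + real n2 * (2 * Phi 0 N + 19)"
proof -
  have G0: "Good 0 N {}"
  proof -
    have "q (g 0) = 1" using q1 by (simp add: g_def)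
    moreover have "g 0 \<le> popt" using popt_ge1 by (simp add: g_def)
    moreover have "popt < (1 + \<epsilon>) * g N" using popt_lt_H N g_Suc[of N] by simp
    ultimately show ?thesis unfolding Good_def by simp
  qed
  have L0: "1 - 3 * \<rho> * Phi 0 N \<le> measure_pmf.prob (UL (Suc N) (g ` {0..N}, {}, 0)) FinalE"
    using UL_prob[of 0 N "Suc N" "{}" 0] G0 by simp
  have det: "\<And>x. x \<in> set_pmf (UL (Suc N) (g ` {0..N}, {}, 0)) \<Longrightarrow> DetOK 0 N {} 0 x"
    by (rule UL_det) auto
  show "1 - 3 * \<rho> * Phi 0 N - (2 * Phi 0 N + 19) * \<rho> \<le>
           measure_pmf.prob Dst {x. (1 - 5 * \<epsilon>) * Rev M popt \<le> Rev M (fst x)}"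
    unfolding Dst_def
  proof (rule bind_prob_lb2[where G="\<lambda>x. x \<in> FinalE"])
    show "1 - 3 * \<rho> * Phi 0 N \<le> measure_pmf.prob (UL (Suc N) (g ` {0..N}, {}, 0)) {x. x \<in> FinalE}"
      using L0 by simp
    show "0 \<le> (2 * Phi 0 N + 19) * \<rho>" using Phi_nonneg r0 by simp
    fix x assume xs: "x \<in> set_pmf (UL (Suc N) (g ` {0..N}, {}, 0))" and xF: "x \<in> FinalE"
    obtain S Sc Q where x: "x = (S, Sc, Q)" by (cases x) auto
    have D: "DetOK 0 N {} 0 (S, Sc, Q)" using det xs x by simp
    note CT = card_T[OF D]
    define ps where "ps = sorted_list_of_set (Sc \<union> S)"
    have lenps: "real (length ps) \<le> 2 * Phi 0 N + 19" unfolding ps_def using CT by simp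
    have "1 - real (length ps) * \<rho> - 0 \<le> measure_pmf.prob (bind_pmf (est_list q n2 ps) (\<lambda>L.
          return_pmf (pick_argmax L, Q + n2 * card (Sc \<union> S)))) {x. (1 - 5 * \<epsilon>) * Rev M popt \<le> Rev M (fst x)}"
    proof (rule bind_prob_lb2[where G="est_good q (\<epsilon> / 1000) ps"])
      show "1 - real (length ps) * \<rho> \<le> measure_pmf.prob (est_list q n2 ps) {L. est_good q (\<epsilon> / 1000) ps L}"
        by (rule est_list_good[OF bad2 r0])
      fix L assume "est_good q (\<epsilon> / 1000) ps L"
      then have "(1 - 5 * \<epsilon>) * Rev M popt \<le> Rev M (pick_argmax L)"
        using final_good[of S Sc Q L] xF x unfolding ps_def by simp
      then show "1 - 0 \<le> measure_pmf.prob (return_pmf (pick_argmax L, Q + n2 * card (Sc \<union> S)))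
          {x. (1 - 5 * \<epsilon>) * Rev M popt \<le> Rev M (fst x)}" by (simp add: indicator_def)
    qed simp
    moreover have "real (length ps) * \<rho> \<le> (2 * Phi 0 N + 19) * \<rho>" using lenps r0 by (intro mult_right_mono) auto
    ultimately show "1 - (2 * Phi 0 N + 19) * \<rho> \<le> measure_pmf.prob ((\<lambda>(S, Sc, Q).
       (let Sc' = Sc \<union> S in
        bind_pmf (est_list q n2 (sorted_list_of_set Sc')) (\<lambda>L.
          return_pmf (pick_argmax L, Q + n2 * card Sc')))) x) {x. (1 - 5 * \<epsilon>) * Rev M popt \<le> Rev M (fst x)}"
      unfolding x ps_def by (simp add: Let_def)
  qed
  show "\<forall>x\<in>set_pmf Dst. real (snd x) \<le> real (n1 + 2 * n2) * Phi 0 N + real n2 * (2 * Phi 0 N + 19)"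
  proof
    fix y assume y: "y \<in> set_pmf Dst"
    then obtain x where xs: "x \<in> set_pmf (UL (Suc N) (g ` {0..N}, {}, 0))"
      and yx: "y \<in> set_pmf ((\<lambda>(S, Sc, Q).
       (let Sc' = Sc \<union> S in
        bind_pmf (est_list q n2 (sorted_list_of_set Sc')) (\<lambda>L.
          return_pmf (pick_argmax L, Q + n2 * card Sc')))) x)" unfolding Dst_def by auto
    obtain S Sc Q where x: "x = (S, Sc, Q)" by (cases x) auto
    have D: "DetOK 0 N {} 0 (S, Sc, Q)" using det xs x by simp
    note CT = card_T[OF D]
    have Qb: "real Q \<le> real (n1 + 2 * n2) * Phi 0 N" using D unfolding DetOK_def by simp
    have "snd y = Q + n2 * card (Sc \<union> S)" using yx unfolding x by (auto simp: Let_def)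
    then have "real (snd y) = real Q + real n2 * real (card (Sc \<union> S))" by simp
    also have "\<dots> \<le> real (n1 + 2 * n2) * Phi 0 N + real n2 * (2 * Phi 0 N + 19)"
      using Qb CT(1) by (intro add_mono mult_left_mono) auto
    finally show "real (snd y) \<le> real (n1 + 2 * n2) * Phi 0 N + real n2 * (2 * Phi 0 N + 19)" .
  qed
qed

end



lemma ln_ge2: assumes "10 \<le> (x::real)" shows "2 \<le> ln x"
proof -
  have "exp (1::real) < 272/100" by (rule e_less_272)
  then have "exp (1::real) * exp 1 \<le> 272/100 * (272/100)" by (intro mult_mono) auto
  moreover have "exp (2::real) = exp 1 * exp 1" by (simp add: exp_add[symmetric])
  ultimately have "exp (2::real) \<le> x" using assms by simp
  then show ?thesis using assms by (subst ln_ge_iff) auto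
qed

lemma ln132: "ln (132::real) \<le> 8"
proof -
  have "2 \<le> exp (1::real)" using exp_ge_add_one_self[of 1] by simp
  then have "(2::real) ^ 8 \<le> exp 1 ^ 8" by (intro power_mono) auto
  also have "exp (1::real) ^ 8 = exp (of_nat 8 * 1)" by (subst exp_of_nat_mult) simp
  finally have "132 \<le> exp (8::real)" by simp
  then have "ln (132::real) \<le> ln (exp 8)" by (subst ln_le_cancel_iff) auto
  then show ?thesis by simp
qed

lemma ln54_lower: "1/5 \<le> ln (5/4::real)"
proof -
  have "ln (4/5::real) \<le> 4/5 - 1" by (intro ln_le_minus_one) auto
  moreover have "ln (4/5::real) = - ln (5/4)" using ln_inverse[of "5/4::real"] by simp
  ultimately show ?thesis by simp
qed

lemma le_div_self: assumes "0 \<le> (x::real)" "0 < y" "y \<le> 1" shows "x \<le> x / y"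
proof -
  have "x * y \<le> x * 1" using assms by (intro mult_left_mono) auto
  then show ?thesis using assms by (simp add: le_divide_eq)
qed

lemma nat_ceil_bounds: assumes "0 \<le> x" shows "x \<le> real (nat \<lceil>x\<rceil>)" "real (nat \<lceil>x\<rceil>) \<le> x + 1"
proof -
  have "0 \<le> \<lceil>x\<rceil>" using assms by simp
  then have e: "real (nat \<lceil>x\<rceil>) = of_int \<lceil>x\<rceil>" by simp
  show "x \<le> real (nat \<lceil>x\<rceil>)" unfolding e by simp
  show "real (nat \<lceil>x\<rceil>) \<le> x + 1" unfolding e by simp
qed

context gridl
begin

lemma grid_N:
  assumes H: "1 \<le> H"
  shows "\<exists>N. grid 1 H \<epsilon> = g ` {0..N} \<and> H < g (Suc N) \<and> g N \<le> H"
proof -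
  define K where "K = {k. g k \<le> H}"
  have bern: "1 + real k * \<epsilon> \<le> g k" for k
    unfolding g_def using e0 by (intro Bernoulli_inequality) auto
  have "K \<subseteq> {..nat \<lceil>H / \<epsilon>\<rceil>}"
  proof
    fix k assume "k \<in> K"
    then have "1 + real k * \<epsilon> \<le> H" using bern[of k] unfolding K_def by simp
    then have "real k \<le> H / \<epsilon>" using e0 by (simp add: field_simps)
    moreover have "H / \<epsilon> \<le> real (nat \<lceil>H / \<epsilon>\<rceil>)" using nat_ceil_bounds(1)[of "H / \<epsilon>"] H e0 by simp
    ultimately have "real k \<le> real (nat \<lceil>H / \<epsilon>\<rceil>)" by linarith
    then show "k \<in> {..nat \<lceil>H / \<epsilon>\<rceil>}" by simp
  qed
  then have finK: "finite K" by (rule finite_subset) auto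
  have K0: "0 \<in> K" unfolding K_def g_def using H by simp
  define N where "N = Max K"
  have NK: "N \<in> K" unfolding N_def using Max_in[OF finK] K0 by auto
  have Keq: "K = {0..N}"
  proof
    show "K \<subseteq> {0..N}" unfolding N_def using Max_ge[OF finK] by auto
    show "{0..N} \<subseteq> K"
    proof
      fix k assume "k \<in> {0..N}"
      then have "g k \<le> g N" by (simp add: g_le_iff)
      then show "k \<in> K" using NK unfolding K_def by simp
    qed
  qed
  have "Suc N \<notin> K" using Keq by simp
  then have HN: "H < g (Suc N)" unfolding K_def by simp
  have "grid 1 H \<epsilon> = g ` K" unfolding grid_def K_def g_def by auto
  moreover have "g N \<le> H" using NK unfolding K_def by simp
  ultimately show ?thesis using Keq HN by auto
qed

end

lemma main_lemma:
  fixes H \<epsilon> \<delta> C :: real and M :: "real measure" and f :: "real \<Rightarrow> real" and popt :: real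
  assumes C: "2000000 \<le> C" and H: "H \<ge> 1" and e: "0 < \<epsilon>" "\<epsilon> \<le> 0.1" and d: "0 < \<delta>" "\<delta> \<le> 1"
    and MHR: "MHR_on M f H" and opt: "\<forall>p. Rev M p \<le> Rev M popt"
  shows "measure_pmf.prob (AlgU (sale_prob M) 1 H \<delta> \<epsilon> (exp (-1)) C) {x. Rev M (fst x) \<ge> (1 - 5 * \<epsilon>) * Rev M popt} \<ge> 1 - \<delta> \<and>
        (\<forall>x \<in> set_pmf (AlgU (sale_prob M) 1 H \<delta> \<epsilon> (exp (-1)) C). real (snd x) \<le>
            (1000 * (C + 1)) * (1 / \<epsilon>\<^sup>2) * (ln (H / \<epsilon>)) ^ 4 * (1 + ln (1 / \<delta>)))"
proof -
  interpret mhr_opt M f H popt using MHR H opt by unfold_locales auto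
  interpret gridl \<epsilon> using e by unfold_locales auto
  obtain N where grid: "grid 1 H \<epsilon> = g ` {0..N}" and HN: "H < g (Suc N)" and gN: "g N \<le> H"
    using grid_N[OF H] by blast
  define a where "a = ln H"
  define c where "c = ln (1 / \<epsilon>)"
  define Lg where "Lg = ln (H / \<epsilon>)"
  define Rt where "Rt = Rtilde 1 H \<epsilon>"
  define Lr where "Lr = ln (Rt / \<delta>)"
  define ld where "ld = ln (1 / \<delta>)"
  define n1 where "n1 = nat \<lceil>C * Lr / exp (-1)\<rceil>"
  define n2 where "n2 = nat \<lceil>C * Lr / (exp (-1) * \<epsilon>\<^sup>2)\<rceil>"
  define \<rho> where "\<rho> = 2 * (\<delta> / Rt) ^ 3"
  have a0: "0 \<le> a" unfolding a_def using H by simp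
  have c2: "2 \<le> c" unfolding c_def using e by (intro ln_ge2) (simp add: field_simps)
  have Lgac: "Lg = a + c" unfolding Lg_def a_def c_def using H e by (simp add: ln_div)
  have Lg2: "2 \<le> Lg" using a0 c2 Lgac by simp
  have Rteq: "Rt = 22 * a\<^sup>2 + 44 * (a * c) + 66 * c" unfolding Rt_def Rtilde_def a_def c_def by simp
  have ac0: "0 \<le> a * c" using a0 c2 by simp
  have "0 \<le> a\<^sup>2" by simp
  then have Rt132: "132 \<le> Rt" using Rteq ac0 c2 by linarith
  have ld0: "0 \<le> ld" unfolding ld_def using d by simp
  have Lreq: "Lr = ln Rt + ld" unfolding Lr_def ld_def using d Rt132 by (simp add: ln_div)
  have "Rt \<le> Rt / \<delta>" using Rt132 d by (intro le_div_self) auto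
  then have Lr2: "2 \<le> Lr" unfolding Lr_def using Rt132 by (intro ln_ge2) linarith
  have em: "1/3 < exp (-1::real)" "exp (-1::real) \<le> 1/2" using exp_m1_bounds by auto
  have "\<epsilon> * \<epsilon> \<le> 1 * 1" using e by (intro mult_mono) auto
  then have e2: "\<epsilon>\<^sup>2 \<le> 1" "0 < \<epsilon>\<^sup>2" using e by (auto simp: power2_eq_square)
  have CLr: "0 \<le> C * Lr" using C Lr2 by simp
  have n1lb: "C * Lr \<le> real n1"
  proof -
    have "C * Lr \<le> C * Lr / exp (-1)" using CLr em by (intro le_div_self) auto
    also have "\<dots> \<le> real n1" unfolding n1_def using CLr em by (intro nat_ceil_bounds) simp
    finally show ?thesis .
  qed
  have n2lb: "C * Lr \<le> real n2 * \<epsilon>\<^sup>2"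
  proof -
    have "C * Lr \<le> C * Lr / exp (-1)" using CLr em by (intro le_div_self) auto
    also have "\<dots> = (C * Lr / (exp (-1) * \<epsilon>\<^sup>2)) * \<epsilon>\<^sup>2" using e2 by simp
    also have "\<dots> \<le> real n2 * \<epsilon>\<^sup>2" unfolding n2_def using CLr em e2
      by (intro mult_right_mono nat_ceil_bounds) auto
    finally show ?thesis .
  qed
  have "0 < C * Lr" using C Lr2 by simp
  then have "0 < real n1" using n1lb by linarith
  then have n1pos: "0 < n1" by simp
  have n2pos: "0 < n2"
  proof -
    have "0 < C * Lr" using C Lr2 by simp
    then have "0 < real n2 * \<epsilon>\<^sup>2" using n2lb by linarith
    then show ?thesis by (simp add: zero_less_mult_iff)
  qed
  have expLr: "exp (- (3 * Lr)) = (\<delta> / Rt) ^ 3"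
  proof -
    have "exp (3 * Lr) = exp Lr ^ 3" using exp_of_nat_mult[of 3 Lr] by simp
    also have "exp Lr = Rt / \<delta>" unfolding Lr_def using d Rt132 by simp
    finally have "exp (3 * Lr) = (Rt / \<delta>) ^ 3" .
    then show ?thesis by (simp add: exp_minus power_divide)
  qed
  have r0: "0 \<le> \<rho>" unfolding \<rho>_def using d Rt132 by simp
  have qp: "\<And>p. 0 \<le> q p \<and> q p \<le> 1" using q_nonneg q_le1 by auto
  interpret A: algo M f H popt \<epsilon> n1 n2 \<rho>
  proof unfold_locales
    show "0 < n1" "0 < n2" "0 \<le> \<rho>" by (fact n1pos n2pos r0)+
    fix p
    have "measure_pmf.prob (binomial_pmf n1 (q p)) {k. \<not> \<bar>real k / real n1 - q p\<bar> \<le> 1/12} \<le> 2 * exp (-2 * real n1 * (1/12)\<^sup>2)"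
      using qp[of p] by (intro hoeff n1pos) auto
    also have "\<dots> \<le> 2 * exp (- (3 * Lr))"
    proof -
      have "216 * Lr \<le> C * Lr" using C Lr2 by (intro mult_right_mono) auto
      then have "3 * Lr \<le> 2 * real n1 * (1/12)\<^sup>2" using n1lb by (simp add: power2_eq_square)
      then show ?thesis by simp
    qed
    finally show "measure_pmf.prob (binomial_pmf n1 (q p)) {k. \<not> \<bar>real k / real n1 - q p\<bar> \<le> 1/12} \<le> \<rho>"
      unfolding \<rho>_def expLr .
  next
    fix p
    have "measure_pmf.prob (binomial_pmf n2 (q p)) {k. \<not> \<bar>real k / real n2 - q p\<bar> \<le> \<epsilon>/1000} \<le> 2 * exp (-2 * real n2 * (\<epsilon>/1000)\<^sup>2)"
      using qp[of p] e by (intro hoeff n2pos) auto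
    also have "\<dots> \<le> 2 * exp (- (3 * Lr))"
    proof -
      have "1500000 * Lr \<le> C * Lr" using C Lr2 by (intro mult_right_mono) auto
      then have "3 * Lr \<le> 2 * (real n2 * \<epsilon>\<^sup>2) / 1000000" using n2lb by simp
      also have "\<dots> = 2 * real n2 * (\<epsilon>/1000)\<^sup>2" by (simp add: power2_eq_square)
      finally show ?thesis by simp
    qed
    finally show "measure_pmf.prob (binomial_pmf n2 (q p)) {k. \<not> \<bar>real k / real n2 - q p\<bar> \<le> \<epsilon>/1000} \<le> \<rho>"
      unfolding \<rho>_def expLr .
  qed
  define Dst where "Dst = bind_pmf (A.UL (Suc N) (g ` {0..N}, {}, 0)) (\<lambda>(S, Sc, Q).
       (let Sc' = Sc \<union> S in
        bind_pmf (est_list q n2 (sorted_list_of_set Sc')) (\<lambda>L.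
          return_pmf (pick_argmax L, Q + n2 * card Sc'))))"
  have AD: "AlgU (sale_prob M) 1 H \<delta> \<epsilon> (exp (-1)) C = Dst"
    unfolding Dst_def A.UL_def
    unfolding AlgU_def Let_def grid card_S diff_zero n1_def n2_def Lr_def Rt_def by (rule refl)
  note AM = A.alg_main[OF HN, folded Dst_def]
  define P0 where "P0 = A.Phi 0 N"
  have P0n: "0 \<le> P0" unfolding P0_def by (rule A.Phi_nonneg)
  have P0b: "P0 \<le> 1 + 5 * Lg"
  proof (cases "Suc N - 0 < 20")
    case True then show ?thesis unfolding P0_def A.Phi_def using Lg2 by simp
  next
    case False
    then have N19: "0 + 19 \<le> N" by simp
    define x where "x = (g N - g 0) / (19 * \<epsilon>)"
    have Dp: "19 * \<epsilon> * g 0 \<le> g N - g 0" by (rule D_big[OF N19])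
    have "0 < 19 * \<epsilon> * g 0" using e g_pos[of 0] by simp
    then have x0: "0 < x" unfolding x_def using Dp e by (intro divide_pos_pos) auto
    have xH: "x \<le> H / \<epsilon>"
    proof -
      have "g N - g 0 \<le> H" using gN g_pos[of 0] by simp
      then have "(g N - g 0) / (19 * \<epsilon>) \<le> H / (19 * \<epsilon>)" using e by (intro divide_right_mono) auto
      also have "\<dots> \<le> H / \<epsilon>" using e H by (intro divide_left_mono) auto
      finally show ?thesis unfolding x_def .
    qed
    have lx: "ln x \<le> Lg" unfolding Lg_def using x0 xH by simp
    have "ln x / ln (5/4) \<le> 5 * Lg"
    proof (cases "ln x \<le> 0")
      case True
      then have "ln x / ln (5/4) \<le> 0" by (simp add: divide_nonpos_pos)
      then show ?thesis using Lg2 by simp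
    next
      case False
      then have "ln x / ln (5/4) \<le> ln x / (1/5)" using ln54_lower by (intro divide_left_mono) auto
      then show ?thesis using lx by simp
    qed
    then show ?thesis unfolding P0_def A.Phi_def x_def using False by simp
  qed
  have P37: "5 * P0 + 19 \<le> 37 * Lg" using P0b Lg2 by simp
  have aa: "a \<le> a\<^sup>2 + 1/4"
  proof -
    have "0 \<le> (a - 1/2)\<^sup>2" by simp
    then show ?thesis by (simp add: power2_eq_square algebra_simps)
  qed
  have Rt3: "74 * Lg \<le> Rt ^ 3"
  proof -
    have "Rt ^ 3 = Rt * Rt * Rt" by (simp add: power3_eq_cube)
    moreover have "132 * 132 * Rt \<le> Rt * Rt * Rt" using Rt132 by (intro mult_right_mono mult_mono) auto
    moreover have "74 * Lg \<le> 132 * 132 * Rt" using Rteq Lgac aa ac0 c2 a0 by linarith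
    ultimately show ?thesis by linarith
  qed
  have rho_bound: "\<rho> * (5 * P0 + 19) \<le> \<delta>"
  proof -
    have "\<delta> * \<delta> \<le> 1 * 1" using d by (intro mult_mono) auto
    then have "\<delta> * (\<delta> * \<delta>) \<le> \<delta> * 1" using d by (intro mult_left_mono) auto
    then have d3: "\<delta> ^ 3 \<le> \<delta>" by (simp add: power3_eq_cube)
    have "\<rho> * (5 * P0 + 19) \<le> \<rho> * (37 * Lg)" using P37 r0 by (intro mult_left_mono) auto
    also have "\<dots> = \<delta> ^ 3 * (74 * Lg) / Rt ^ 3" unfolding \<rho>_def by (simp add: power_divide)
    also have "\<dots> \<le> \<delta> * (74 * Lg) / Rt ^ 3" using d3 Lg2 Rt132 by (intro divide_right_mono mult_right_mono) auto
    also have "\<dots> \<le> \<delta> * 1" using Rt3 Rt132 d by (simp add: field_simps)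
    finally show ?thesis by simp
  qed
  have prob: "1 - \<delta> \<le> measure_pmf.prob Dst {x. (1 - 5 * \<epsilon>) * Rev M popt \<le> Rev M (fst x)}"
    using AM(1) rho_bound unfolding P0_def by (simp add: algebra_simps)
  have n12: "n1 \<le> n2" unfolding n1_def n2_def
  proof (intro nat_mono ceiling_mono)
    have "C * Lr / exp (-1) \<le> C * Lr / exp (-1) / \<epsilon>\<^sup>2" using CLr em e2 by (intro le_div_self) auto
    then show "C * Lr / exp (-1) \<le> C * Lr / (exp (-1) * \<epsilon>\<^sup>2)" by simp
  qed
  have Rtub: "Rt \<le> 132 * Lg\<^sup>2"
  proof -
    have "a \<le> Lg" "c \<le> Lg" using Lgac a0 c2 by auto
    have LL: "Lg * 1 \<le> Lg * Lg" using Lg2 by (intro mult_left_mono) auto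
    have "a\<^sup>2 \<le> Lg\<^sup>2" "a * c \<le> Lg * Lg" using a0 c2 Lg2 \<open>a \<le> Lg\<close> \<open>c \<le> Lg\<close>
      by (auto intro!: power_mono mult_mono)
    moreover have "c \<le> Lg * Lg" using LL \<open>c \<le> Lg\<close> by linarith
    ultimately have "a\<^sup>2 \<le> Lg\<^sup>2" "a * c \<le> Lg * Lg" "c \<le> Lg * Lg" by auto
    then show ?thesis using Rteq by (simp add: power2_eq_square)
  qed
  have lnRt: "ln Rt \<le> 6 * Lg"
  proof -
    have "ln Rt \<le> ln (132 * Lg\<^sup>2)" using Rtub Rt132 by (subst ln_le_cancel_iff) auto
    also have "\<dots> = ln 132 + 2 * ln Lg" using Lg2 by (simp add: ln_mult ln_realpow)
    also have "\<dots> \<le> 8 + 2 * (Lg - 1)" using ln132 ln_le_minus_one[of Lg] Lg2 by simp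
    finally show ?thesis using Lg2 by simp
  qed
  have LrB: "Lr \<le> 6 * Lg * (1 + ld)"
  proof -
    have "Lr \<le> 6 * Lg + ld" using Lreq lnRt by simp
    also have "\<dots> \<le> 6 * Lg + 6 * Lg * ld"
    proof -
      have "1 * ld \<le> (6 * Lg) * ld" using Lg2 ld0 by (intro mult_right_mono) auto
      then show ?thesis by simp
    qed
    finally show ?thesis by (simp add: algebra_simps)
  qed
  have n2ub: "real n2 \<le> (18 * C + 1) * Lg * (1 + ld) / \<epsilon>\<^sup>2"
  proof -
    have A: "real n2 \<le> C * Lr / (exp (-1) * \<epsilon>\<^sup>2) + 1" unfolding n2_def using CLr em e2
      by (intro nat_ceil_bounds) auto
    have B: "C * Lr / (exp (-1) * \<epsilon>\<^sup>2) \<le> 3 * C * Lr / \<epsilon>\<^sup>2"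
    proof -
      have "C * Lr / exp (-1) \<le> C * Lr / (1/3)" using CLr em by (intro divide_left_mono) auto
      then have "C * Lr / exp (-1) / \<epsilon>\<^sup>2 \<le> C * Lr / (1/3) / \<epsilon>\<^sup>2" using e2 by (intro divide_right_mono) auto
      then show ?thesis by (simp add: field_simps)
    qed
    have B2: "3 * C * Lr / \<epsilon>\<^sup>2 \<le> 3 * C * (6 * Lg * (1 + ld)) / \<epsilon>\<^sup>2"
      using LrB C e2 by (intro divide_right_mono mult_left_mono) auto
    have B3: "1 \<le> Lg * (1 + ld) / \<epsilon>\<^sup>2"
    proof -
      have "1 * 1 \<le> Lg * (1 + ld)" using Lg2 ld0 by (intro mult_mono) auto
      also have "\<dots> \<le> Lg * (1 + ld) / \<epsilon>\<^sup>2" using e2 Lg2 ld0 by (intro le_div_self) auto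
      finally show ?thesis by simp
    qed
    have E: "3 * C * (6 * Lg * (1 + ld)) / \<epsilon>\<^sup>2 + Lg * (1 + ld) / \<epsilon>\<^sup>2 = (18 * C + 1) * Lg * (1 + ld) / \<epsilon>\<^sup>2"
      using e2 by (simp add: field_simps add_divide_distrib[symmetric])
    show ?thesis using A B B2 B3 E by linarith
  qed
  have queries: "\<forall>x\<in>set_pmf Dst. real (snd x) \<le> (1000 * (C + 1)) * (1 / \<epsilon>\<^sup>2) * Lg ^ 4 * (1 + ld)"
  proof
    fix x assume x: "x \<in> set_pmf Dst"
    have "real (snd x) \<le> real (n1 + 2 * n2) * P0 + real n2 * (2 * P0 + 19)" using AM(2) x unfolding P0_def by blast
    also have "\<dots> \<le> real (3 * n2) * P0 + real n2 * (2 * P0 + 19)" using n12 P0n by (intro add_mono mult_right_mono) auto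
    also have "\<dots> = real n2 * (5 * P0 + 19)" by (simp add: algebra_simps)
    also have "\<dots> \<le> ((18 * C + 1) * Lg * (1 + ld) / \<epsilon>\<^sup>2) * (37 * Lg)"
      using n2ub P37 P0n by (intro mult_mono) auto
    also have "\<dots> = (37 * (18 * C + 1)) * (1 / \<epsilon>\<^sup>2) * Lg\<^sup>2 * (1 + ld)" by (simp add: power2_eq_square field_simps)
    also have "\<dots> \<le> (1000 * (C + 1)) * (1 / \<epsilon>\<^sup>2) * Lg ^ 4 * (1 + ld)"
    proof -
      have "Lg\<^sup>2 \<le> Lg ^ 4" using Lg2 by (intro power_increasing) auto
      moreover have "37 * (18 * C + 1) \<le> 1000 * (C + 1)" using C by simp
      ultimately have F1: "(37 * (18 * C + 1)) * (1 / \<epsilon>\<^sup>2) \<le> (1000 * (C + 1)) * (1 / \<epsilon>\<^sup>2)"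
        using e2 by (intro mult_right_mono) auto
      have F3: "0 \<le> (1000 * (C + 1)) * (1 / \<epsilon>\<^sup>2)" using C by simp
      have F4: "0 \<le> Lg\<^sup>2" by simp
      have "(37 * (18 * C + 1)) * (1 / \<epsilon>\<^sup>2) * Lg\<^sup>2 \<le> (1000 * (C + 1)) * (1 / \<epsilon>\<^sup>2) * Lg ^ 4"
        by (rule mult_mono[OF F1 \<open>Lg\<^sup>2 \<le> Lg ^ 4\<close> F3 F4])
      moreover have "0 \<le> 1 + ld" using ld0 by simp
      ultimately show ?thesis by (rule mult_right_mono)
    qed
    finally show "real (snd x) \<le> (1000 * (C + 1)) * (1 / \<epsilon>\<^sup>2) * Lg ^ 4 * (1 + ld)" .
  qed
  show ?thesis using prob queries AD unfolding Lg_def ld_def by simp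
qed



theorem theorem4p2:
  "\<exists>C0. \<forall>C \<ge> C0. \<exists>K. \<forall>(H::real) (\<epsilon>::real) (\<delta>::real) (M::real measure) f popt.
     H \<ge> 1 \<longrightarrow> 0 < \<epsilon> \<longrightarrow> \<epsilon> \<le> 0.1 \<longrightarrow> 0 < \<delta> \<longrightarrow> \<delta> \<le> 1 \<longrightarrow>
     MHR_on M f H \<longrightarrow> (\<forall>p. Rev M p \<le> Rev M popt) \<longrightarrow>
     (let D = AlgU (sale_prob M) 1 H \<delta> \<epsilon> (exp (-1)) C in
        measure_pmf.prob D {x. Rev M (fst x) \<ge> (1 - 5 * \<epsilon>) * Rev M popt} \<ge> 1 - \<delta> \<and>
        (\<forall>x \<in> set_pmf D. real (snd x) \<le>
            K * (1 / \<epsilon>\<^sup>2) * (ln (H / \<epsilon>)) ^ 4 * (1 + ln (1 / \<delta>))))"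
  proof -
  have "\<forall>C \<ge> (2000000::real). \<exists>K. \<forall>(H::real) (\<epsilon>::real) (\<delta>::real) (M::real measure) f popt.
     H \<ge> 1 \<longrightarrow> 0 < \<epsilon> \<longrightarrow> \<epsilon> \<le> 0.1 \<longrightarrow> 0 < \<delta> \<longrightarrow> \<delta> \<le> 1 \<longrightarrow>
     MHR_on M f H \<longrightarrow> (\<forall>p. Rev M p \<le> Rev M popt) \<longrightarrow>
     (let D = AlgU (sale_prob M) 1 H \<delta> \<epsilon> (exp (-1)) C in
        measure_pmf.prob D {x. Rev M (fst x) \<ge> (1 - 5 * \<epsilon>) * Rev M popt} \<ge> 1 - \<delta> \<and>
        (\<forall>x \<in> set_pmf D. real (snd x) \<le>
            K * (1 / \<epsilon>\<^sup>2) * (ln (H / \<epsilon>)) ^ 4 * (1 + ln (1 / \<delta>))))"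
  proof (intro allI impI)
    fix C :: real assume C: "2000000 \<le> C"
    show "\<exists>K. \<forall>(H::real) (\<epsilon>::real) (\<delta>::real) (M::real measure) f popt.
     H \<ge> 1 \<longrightarrow> 0 < \<epsilon> \<longrightarrow> \<epsilon> \<le> 0.1 \<longrightarrow> 0 < \<delta> \<longrightarrow> \<delta> \<le> 1 \<longrightarrow>
     MHR_on M f H \<longrightarrow> (\<forall>p. Rev M p \<le> Rev M popt) \<longrightarrow>
     (let D = AlgU (sale_prob M) 1 H \<delta> \<epsilon> (exp (-1)) C in
        measure_pmf.prob D {x. Rev M (fst x) \<ge> (1 - 5 * \<epsilon>) * Rev M popt} \<ge> 1 - \<delta> \<and>
        (\<forall>x \<in> set_pmf D. real (snd x) \<le>
            K * (1 / \<epsilon>\<^sup>2) * (ln (H / \<epsilon>)) ^ 4 * (1 + ln (1 / \<delta>))))"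
    proof (intro exI[of _ "1000 * (C + 1)"] allI impI)
      fix H \<epsilon> \<delta> :: real and M :: "real measure" and f :: "real \<Rightarrow> real" and popt :: real
      assume a: "H \<ge> 1" "0 < \<epsilon>" "\<epsilon> \<le> 0.1" "0 < \<delta>" "\<delta> \<le> 1" "MHR_on M f H"
        "\<forall>p. Rev M p \<le> Rev M popt"
      show "let D = AlgU (sale_prob M) 1 H \<delta> \<epsilon> (exp (-1)) C in
        measure_pmf.prob D {x. Rev M (fst x) \<ge> (1 - 5 * \<epsilon>) * Rev M popt} \<ge> 1 - \<delta> \<and>
        (\<forall>x \<in> set_pmf D. real (snd x) \<le>
            (1000 * (C + 1)) * (1 / \<epsilon>\<^sup>2) * (ln (H / \<epsilon>)) ^ 4 * (1 + ln (1 / \<delta>)))"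
        unfolding Let_def by (rule main_lemma[OF C a])
    qed
  qed
  then show ?thesis by blast
qed

end
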